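(* Let $\chi$ be an indecomposable character on $S(2^\infty)$ with GNS triple $(\pi,\mathcal{H},\xi)$. There exists $\alpha\in[0,\infty)\cup\{\infty\}$ such that $tr(P^A)=\mu(A)^\alpha$ for every finite union of cylinders (equivalently, every nice set) $A\subset X$.
   Context: Let $X=\{0,1\}^{\mathbb{N}}$ with product measure $\mu=\nu^{\otimes\infty}$, $\nu(\{0\})=\nu(\{1\})=1/2$; $X_n=\{0,1\}^n$; $S(2^n)$ the group of all bijections of $X_n$, acting on $X$ by $s((x,a))=(s(x),a)$; $S(2^\infty)=\bigcup_n S(2^n)$. A character on a group $G$ is a function $\chi$ with $\chi(g_1g_2)=\chi(g_2g_1)$, $(\chi(g_ig_j^{-1}))_{i,j}$ positive semidefinite for all finite families, and $\chi(e)=1$; indecomposable means not a nontrivial convex combination of two distinct characters. GNS triple: $\pi$ a unitary representation on $\mathcal{H}$, $\xi$ a unit cyclic vector, $\chi(g)=(\pi(g)\xi,\xi)$; $tr(T)=(T\xi,\xi)$. A set $A\subset X$ is nice if $A=C\times X$ for some $k$ and $C\subset X_k$ (sequences whose first $k$ coordinates lie in $C$). For such $A$ and $m>k$, $s^A_m$ fixes $A$ pointwise and flips the $m$-th coordinate of points outside $A$; $P^A$ is the weak operator limit of $\pi(s^A_m)$ as $m\to\infty$. Conventions: $0^0=1$, $x^\infty=0$ for $x\in[0,1)$, $1^\infty=1$. *)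

theory Defs
  imports "HOL-Probability.Probability"
begin

type_synonym point = "nat \<Rightarrow> bool"   (* X = {0,1}^N, coordinates indexed from 0 *)

definition Xn :: "nat \<Rightarrow> bool list set" where
  "Xn n = {xs. length xs = n}"

(* action of a bijection sigma of X_n on X: s((x,a)) = (s(x),a) *)
definition act :: "nat \<Rightarrow> (bool list \<Rightarrow> bool list) \<Rightarrow> point \<Rightarrow> point" where
  "act n \<sigma> x = (\<lambda>i. if i < n then \<sigma> (map x [0..<n]) ! i else x i)"

(* S(2^infinity) = union of S(2^n), realised as a group of maps X -> X under composition *)
definition S2inf :: "(point \<Rightarrow> point) set" where
  "S2inf = {act n \<sigma> | n \<sigma>. bij_betw \<sigma> (Xn n) (Xn n)}"

definition is_character :: "((point \<Rightarrow> point) \<Rightarrow> complex) \<Rightarrow> bool" where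
  "is_character chi \<longleftrightarrow>
     (\<forall>g\<in>S2inf. \<forall>h\<in>S2inf. chi (g \<circ> h) = chi (h \<circ> g)) \<and>
     (\<forall>(n::nat) (g :: nat \<Rightarrow> point \<Rightarrow> point) (c :: nat \<Rightarrow> complex).
        (\<forall>i<n. g i \<in> S2inf) \<longrightarrow>
        (let q = (\<Sum>i<n. \<Sum>j<n. cnj (c i) * c j * chi (g i \<circ> inv (g j)))
         in Im q = 0 \<and> Re q \<ge> 0)) \<and>
     chi id = 1"

definition indecomposable_character :: "((point \<Rightarrow> point) \<Rightarrow> complex) \<Rightarrow> bool" where
  "indecomposable_character chi \<longleftrightarrow> is_character chi \<and>
     \<not> (\<exists>t::real. \<exists>chi1 chi2. 0 < t \<and> t < 1 \<and> is_character chi1 \<and> is_character chi2 \<and>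
           (\<exists>g\<in>S2inf. chi1 g \<noteq> chi2 g) \<and>
           (\<forall>g\<in>S2inf. chi g = of_real t * chi1 g + of_real (1 - t) * chi2 g))"

definition mu :: "point measure" where
  "mu = PiM UNIV (\<lambda>_::nat. measure_pmf (pmf_of_set (UNIV :: bool set)))"

definition nice :: "point set \<Rightarrow> bool" where
  "nice A \<longleftrightarrow> (\<exists>k C. C \<subseteq> Xn k \<and> A = {x. map x [0..<k] \<in> C})"

(* s^A_m: fixes A pointwise, flips coordinate m (0-based) outside A *)
definition sA :: "point set \<Rightarrow> nat \<Rightarrow> point \<Rightarrow> point" where
  "sA A m x = (if x \<in> A then x else x(m := \<not> x m))"

(* x^alpha for x \<in> [0,1], alpha \<in> [0,\<infinity>], with 0^0 = 1, x^\<infinity> = 0 (x<1), 1^\<infinity> = 1 *)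
definition epow :: "real \<Rightarrow> ennreal \<Rightarrow> real" where
  "epow x \<alpha> = (if \<alpha> = \<top> then (if x = 1 then 1 else 0)
               else if \<alpha> = 0 then 1
               else x powr (enn2real \<alpha>))"

end

theory Submission
  imports Defs
begin


definition cyl :: "nat \<Rightarrow> bool list set \<Rightarrow> point set" where
  "cyl k C = {x. map x [0..<k] \<in> C}"

lemma finite_Xn[simp]: "finite (Xn n)"
  using finite_lists_length_eq[of "UNIV :: bool set" n] by (simp add: Xn_def)

lemma card_Xn: "card (Xn n) = 2 ^ n"
  using card_lists_length_eq[of "UNIV :: bool set" n] by (simp add: Xn_def)

lemma mu_point_cyl:
  assumes "length ys = k"
  shows "measure mu {x. \<forall>i<k. x i = ys ! i} = 1 / 2^k"
proof -
  let ?M = "\<lambda>_::nat. measure_pmf (pmf_of_set (UNIV :: bool set))"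
  have eq: "{x. \<forall>i<k. x i = ys ! i} = prod_emb UNIV ?M {..<k} (Pi\<^sub>E {..<k} (\<lambda>i. {ys ! i}))"
    unfolding prod_emb_def space_PiM by (simp add: vimage_def restrict_PiE_iff Pi_def)
  have "emeasure mu {x. \<forall>i<k. x i = ys ! i} = (\<Prod>i\<in>{..<k}. emeasure (?M i) {ys ! i})"
    unfolding mu_def eq
    by (rule emeasure_PiM_emb) (auto intro: prob_space_measure_pmf)
  also have "\<dots> = (\<Prod>i\<in>{..<k}. ennreal (1/2))"
    by (intro prod.cong refl) (simp add: emeasure_pmf_single)
  also have "\<dots> = ennreal ((1/2)^k)"
    by (subst prod_ennreal) auto
  finally show ?thesis
    by (simp add: measure_def power_one_over)
qed

lemma mu_prob: "prob_space mu"
  unfolding mu_def by (intro prob_space_PiM prob_space_measure_pmf)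

lemma sets_mu: "sets mu = sets (PiM UNIV (\<lambda>_::nat. measure_pmf (pmf_of_set (UNIV :: bool set))))"
  by (simp add: mu_def)

lemma point_cyl_sets: "{x. \<forall>i<k. x i = ys ! i} \<in> sets mu"
proof -
  let ?M = "\<lambda>_::nat. measure_pmf (pmf_of_set (UNIV :: bool set))"
  have eq: "{x. \<forall>i<k. x i = ys ! i} = prod_emb UNIV ?M {..<k} (Pi\<^sub>E {..<k} (\<lambda>i. {ys ! i}))"
    unfolding prod_emb_def space_PiM by (simp add: vimage_def restrict_PiE_iff Pi_def)
  show ?thesis unfolding eq mu_def
    by (rule sets_PiM_I) auto
qed

lemma mu_cyl:
  assumes "C \<subseteq> Xn k"
  shows "measure mu (cyl k C) = card C / 2^k"
proof -
  have fin: "finite C" by (rule finite_subset[OF assms finite_Xn])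
  have eq: "cyl k C = (\<Union>ys\<in>C. {x. \<forall>i<k. x i = ys ! i})"
  proof (rule set_eqI)
    fix x
    have "x \<in> cyl k C \<longleftrightarrow> (\<exists>ys\<in>C. \<forall>i<k. x i = ys ! i)"
    proof
      assume "x \<in> cyl k C"
      then have "map x [0..<k] \<in> C" by (simp add: cyl_def)
      moreover have "\<forall>i<k. x i = map x [0..<k] ! i" by simp
      ultimately show "\<exists>ys\<in>C. \<forall>i<k. x i = ys ! i" by blast
    next
      assume "\<exists>ys\<in>C. \<forall>i<k. x i = ys ! i"
      then obtain ys where ys: "ys \<in> C" "\<forall>i<k. x i = ys ! i" by blast
      have "length ys = k" using assms ys(1) by (auto simp: Xn_def)
      then have "map x [0..<k] = ys" using ys(2) by (intro nth_equalityI) auto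
      then show "x \<in> cyl k C" using ys(1) by (simp add: cyl_def)
    qed
    then show "x \<in> cyl k C \<longleftrightarrow> x \<in> (\<Union>ys\<in>C. {x. \<forall>i<k. x i = ys ! i})" by simp
  qed
  have disj: "disjoint_family_on (\<lambda>ys. {x. \<forall>i<k. x i = ys ! i}) C"
  unfolding disjoint_family_on_def
  proof (intro ballI impI)
    fix ys zs assume "ys \<in> C" "zs \<in> C" "ys \<noteq> zs"
    then have l: "length ys = k" "length zs = k" using assms by (auto simp: Xn_def)
    show "{x. \<forall>i<k. x i = ys ! i} \<inter> {x. \<forall>i<k. x i = zs ! i} = {}"
    proof (rule ccontr)
      assume "\<not> ?thesis"
      then obtain x where "\<forall>i<k. x i = ys ! i" "\<forall>i<k. x i = zs ! i" by blast
      then have "ys = zs" using l by (intro nth_equalityI) auto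
      with \<open>ys \<noteq> zs\<close> show False by simp
    qed
  qed
  have "measure mu (cyl k C) = (\<Sum>ys\<in>C. measure mu {x. \<forall>i<k. x i = ys ! i})"
    unfolding eq
  proof (rule measure_finite_Union[OF fin _ disj])
    show "(\<lambda>ys. {x. \<forall>i<k. x i = ys ! i}) ` C \<subseteq> sets mu"
      using point_cyl_sets by blast
    fix ys show "emeasure mu {x. \<forall>i<k. x i = ys ! i} \<noteq> \<infinity>"
      using finite_measure.emeasure_finite[OF prob_space.finite_measure[OF mu_prob]] by simp
  qed
  also have "\<dots> = (\<Sum>ys\<in>C. 1 / 2^k)"
    using assms by (intro sum.cong refl mu_point_cyl) (auto simp: Xn_def)
  finally show ?thesis by simp
qed



definition lvl :: "nat \<Rightarrow> (point \<Rightarrow> point) \<Rightarrow> bool" where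
  "lvl n f \<longleftrightarrow> bij f \<and> (\<forall>x i. n \<le> i \<longrightarrow> f x i = x i) \<and>
     (\<forall>x y. (\<forall>i<n. x i = y i) \<longrightarrow> (\<forall>i<n. f x i = f y i))"

definition extl :: "bool list \<Rightarrow> point" where
  "extl xs = (\<lambda>i. if i < length xs then xs ! i else False)"

lemma map_act:
  assumes "length (\<rho> (map x [0..<n])) = n"
  shows "map (act n \<rho> x) [0..<n] = \<rho> (map x [0..<n])"
  using assms by (intro nth_equalityI) (auto simp: act_def)

lemma act_inv:
  assumes b: "bij_betw \<sigma> (Xn n) (Xn n)"
  shows "act n \<sigma> \<circ> act n (inv_into (Xn n) \<sigma>) = id" "act n (inv_into (Xn n) \<sigma>) \<circ> act n \<sigma> = id"
proof -
  define \<tau> where "\<tau> = inv_into (Xn n) \<sigma>"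
  have bt: "bij_betw \<tau> (Xn n) (Xn n)" unfolding \<tau>_def by (rule bij_betw_inv_into[OF b])
  have mx: "map x [0..<n] \<in> Xn n" for x by (simp add: Xn_def)
  have ls: "length (\<sigma> (map x [0..<n])) = n" for x
    using bij_betwE[OF b] mx by (auto simp: Xn_def)
  have lt: "length (\<tau> (map x [0..<n])) = n" for x
    using bij_betwE[OF bt] mx by (auto simp: Xn_def)
  have st: "\<sigma> (\<tau> ys) = ys" if "ys \<in> Xn n" for ys
    unfolding \<tau>_def using b that by (simp add: bij_betw_inv_into_right)
  have ts: "\<tau> (\<sigma> ys) = ys" if "ys \<in> Xn n" for ys
    unfolding \<tau>_def using b that by (simp add: bij_betw_inv_into_left)
  have 1: "act n \<sigma> (act n \<tau> x) = x" for x
  proof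
    fix i
    have m: "map (act n \<tau> x) [0..<n] = \<tau> (map x [0..<n])" by (rule map_act) (rule lt)
    show "act n \<sigma> (act n \<tau> x) i = x i"
    proof (cases "i < n")
      case True
      then have "act n \<sigma> (act n \<tau> x) i = \<sigma> (\<tau> (map x [0..<n])) ! i"
        unfolding act_def[of n \<sigma>] m by simp
      then show ?thesis using st[OF mx[of x]] True by simp
    next
      case False then show ?thesis by (simp add: act_def)
    qed
  qed
  have 2: "act n \<tau> (act n \<sigma> x) = x" for x
  proof
    fix i
    have m: "map (act n \<sigma> x) [0..<n] = \<sigma> (map x [0..<n])" by (rule map_act) (rule ls)
    show "act n \<tau> (act n \<sigma> x) i = x i"
    proof (cases "i < n")
      case True
      then have "act n \<tau> (act n \<sigma> x) i = \<tau> (\<sigma> (map x [0..<n])) ! i"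
        unfolding act_def[of n \<tau>] m by simp
      then show ?thesis using ts[OF mx[of x]] True by simp
    next
      case False then show ?thesis by (simp add: act_def)
    qed
  qed
  show "act n \<sigma> \<circ> act n (inv_into (Xn n) \<sigma>) = id" by (rule ext) (simp add: 1[unfolded \<tau>_def])
  show "act n (inv_into (Xn n) \<sigma>) \<circ> act n \<sigma> = id" by (rule ext) (simp add: 2[unfolded \<tau>_def])
qed

lemma act_lvl:
  assumes b: "bij_betw \<sigma> (Xn n) (Xn n)"
  shows "lvl n (act n \<sigma>)"
proof -
  define \<tau> where "\<tau> = inv_into (Xn n) \<sigma>"
  have bt: "bij_betw \<tau> (Xn n) (Xn n)" unfolding \<tau>_def by (rule bij_betw_inv_into[OF b])
  have mx: "map x [0..<n] \<in> Xn n" for x by (simp add: Xn_def)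
  have ls: "length (\<sigma> (map x [0..<n])) = n" for x
    using bij_betwE[OF b] mx by (auto simp: Xn_def)
  have lt: "length (\<tau> (map x [0..<n])) = n" for x
    using bij_betwE[OF bt] mx by (auto simp: Xn_def)
  have st: "\<sigma> (\<tau> ys) = ys" if "ys \<in> Xn n" for ys
    unfolding \<tau>_def using b that by (simp add: bij_betw_inv_into_right)
  have ts: "\<tau> (\<sigma> ys) = ys" if "ys \<in> Xn n" for ys
    unfolding \<tau>_def using b that by (simp add: bij_betw_inv_into_left)
  have 1: "act n \<sigma> (act n \<tau> x) = x" for x
  proof
    fix i
    have m: "map (act n \<tau> x) [0..<n] = \<tau> (map x [0..<n])" by (rule map_act) (rule lt)
    show "act n \<sigma> (act n \<tau> x) i = x i"
    proof (cases "i < n")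
      case True
      then have "act n \<sigma> (act n \<tau> x) i = \<sigma> (\<tau> (map x [0..<n])) ! i"
        unfolding act_def[of n \<sigma>] m by simp
      then show ?thesis using st[OF mx[of x]] True by simp
    next
      case False then show ?thesis by (simp add: act_def)
    qed
  qed
  have 2: "act n \<tau> (act n \<sigma> x) = x" for x
  proof
    fix i
    have m: "map (act n \<sigma> x) [0..<n] = \<sigma> (map x [0..<n])" by (rule map_act) (rule ls)
    show "act n \<tau> (act n \<sigma> x) i = x i"
    proof (cases "i < n")
      case True
      then have "act n \<tau> (act n \<sigma> x) i = \<tau> (\<sigma> (map x [0..<n])) ! i"
        unfolding act_def[of n \<tau>] m by simp
      then show ?thesis using ts[OF mx[of x]] True by simp
    next
      case False then show ?thesis by (simp add: act_def)
    qed
  qed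
  have "bij (act n \<sigma>)"
    by (rule o_bij[of "act n \<tau>"]) (auto simp: 1 2 fun_eq_iff)
  moreover have "\<forall>x i. n \<le> i \<longrightarrow> act n \<sigma> x i = x i" by (simp add: act_def)
  moreover have "\<forall>x y. (\<forall>i<n. x i = y i) \<longrightarrow> (\<forall>i<n. act n \<sigma> x i = act n \<sigma> y i)"
  proof (intro allI impI)
    fix x y :: point and i :: nat assume "\<forall>i<n. x i = y i" "i < n"
    then have e: "map x [0..<n] = map y [0..<n]" by simp
    show "act n \<sigma> x i = act n \<sigma> y i" unfolding act_def e using \<open>i<n\<close> by simp
  qed
  ultimately show ?thesis by (simp add: lvl_def)
qed

lemma ext_map: "i < n \<Longrightarrow> extl (map x [0..<n]) i = x i"
  by (simp add: extl_def)

lemma lvl_act: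
  assumes "lvl n f"
  shows "\<exists>\<sigma>. bij_betw \<sigma> (Xn n) (Xn n) \<and> f = act n \<sigma>"
proof -
  have bf: "bij f" and hi: "\<And>x i. n \<le> i \<Longrightarrow> f x i = x i"
    and dep: "\<And>x y i. (\<forall>i<n. x i = y i) \<Longrightarrow> i < n \<Longrightarrow> f x i = f y i"
    using assms by (auto simp: lvl_def)
  define \<sigma> where "\<sigma> xs = map (f (extl xs)) [0..<n]" for xs
  have "act n \<sigma> = f"
  proof (intro ext)
    fix x i
    show "act n \<sigma> x i = f x i"
    proof (cases "i < n")
      case True
      have "f (extl (map x [0..<n])) i = f x i"
        by (rule dep) (auto simp: ext_map True)
      then show ?thesis using True by (simp add: act_def \<sigma>_def)
    next
      case False then show ?thesis by (simp add: act_def hi)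
    qed
  qed
  moreover have "bij_betw \<sigma> (Xn n) (Xn n)"
  proof -
    have sub: "\<sigma> ` Xn n \<subseteq> Xn n" by (auto simp: \<sigma>_def Xn_def)
    have inj: "inj_on \<sigma> (Xn n)"
    proof (rule inj_onI)
      fix xs ys assume xs: "xs \<in> Xn n" and ys: "ys \<in> Xn n" and e: "\<sigma> xs = \<sigma> ys"
      have "f (extl xs) = f (extl ys)"
      proof
        fix i
        show "f (extl xs) i = f (extl ys) i"
        proof (cases "i < n")
          case True
          have "\<sigma> xs ! i = \<sigma> ys ! i" using e by simp
          then show ?thesis using True by (simp add: \<sigma>_def)
        next
          case False
          then show ?thesis using xs ys by (simp add: hi extl_def Xn_def)
        qed
      qed
      then have "extl xs = extl ys" using bf by (simp add: bij_def inj_eq)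
      then have "\<forall>i<n. xs ! i = ys ! i"
      proof (intro allI impI)
        fix i assume "extl xs = extl ys" "i < n"
        then have "extl xs i = extl ys i" by simp
        then show "xs ! i = ys ! i" using xs ys \<open>i<n\<close> by (simp add: extl_def Xn_def)
      qed
      then show "xs = ys" using xs ys by (intro nth_equalityI) (auto simp: Xn_def)
    qed
    have "\<sigma> ` Xn n = Xn n" by (rule endo_inj_surj[OF finite_Xn sub inj])
    with inj show ?thesis by (simp add: bij_betw_def)
  qed
  ultimately show ?thesis by metis
qed

lemma S2inf_iff: "g \<in> S2inf \<longleftrightarrow> (\<exists>n. lvl n g)"
proof
  assume "g \<in> S2inf"
  then obtain n \<sigma> where "g = act n \<sigma>" "bij_betw \<sigma> (Xn n) (Xn n)" by (auto simp: S2inf_def)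
  then show "\<exists>n. lvl n g" using act_lvl by blast
next
  assume "\<exists>n. lvl n g"
  then obtain n where "lvl n g" by blast
  from lvl_act[OF this] show "g \<in> S2inf" by (auto simp: S2inf_def)
qed

lemma lvlI: "lvl n g \<Longrightarrow> g \<in> S2inf"
  using S2inf_iff by blast

lemma lvl_bij: "lvl n f \<Longrightarrow> bij f" by (simp add: lvl_def)
lemma lvl_high: "lvl n f \<Longrightarrow> n \<le> i \<Longrightarrow> f x i = x i" by (simp add: lvl_def)
lemma lvl_dep: "lvl n f \<Longrightarrow> (\<forall>i<n. x i = y i) \<Longrightarrow> i < n \<Longrightarrow> f x i = f y i"
  by (simp add: lvl_def)

lemma lvl_mono: assumes "lvl n f" "n \<le> m" shows "lvl m f"
proof -
  have "\<forall>x y. (\<forall>i<m. x i = y i) \<longrightarrow> (\<forall>i<m. f x i = f y i)"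
  proof (intro allI impI)
    fix x y :: point and i :: nat assume a: "\<forall>i<m. x i = y i" "i < m"
    show "f x i = f y i"
    proof (cases "i < n")
      case True then show ?thesis using a assms lvl_dep[OF assms(1), of x y i] by auto
    next
      case False then show ?thesis using a lvl_high[OF assms(1)] by auto
    qed
  qed
  then show ?thesis using assms by (auto simp: lvl_def)
qed

lemma lvl_id[simp]: "lvl n id"
  by (simp add: lvl_def)

lemma lvl_comp: assumes "lvl n f" "lvl n g" shows "lvl n (f \<circ> g)"
proof -
  have "bij (f \<circ> g)" using assms by (simp add: lvl_def bij_comp)
  moreover have "\<forall>x i. n \<le> i \<longrightarrow> (f \<circ> g) x i = x i" using assms by (simp add: lvl_def)
  moreover have "\<forall>x y. (\<forall>i<n. x i = y i) \<longrightarrow> (\<forall>i<n. (f \<circ> g) x i = (f \<circ> g) y i)"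
  proof (intro allI impI)
    fix x y :: point and i :: nat assume a: "\<forall>i<n. x i = y i" "i < n"
    have "\<forall>i<n. g x i = g y i" using a(1) lvl_dep[OF assms(2)] by blast
    then show "(f \<circ> g) x i = (f \<circ> g) y i" using lvl_dep[OF assms(1)] a(2) by simp
  qed
  ultimately show ?thesis by (simp add: lvl_def)
qed

lemma lvl_inv: assumes "lvl n f" shows "lvl n (inv f)"
proof -
  have bf: "bij f" using assms by (simp add: lvl_def)
  have fi: "f (inv f x) = x" for x using bf by (simp add: bij_def surj_f_inv_f)
  have "bij (inv f)" using bf by (rule bij_imp_bij_inv)
  moreover have "\<forall>x i. n \<le> i \<longrightarrow> inv f x i = x i"
  proof (intro allI impI)
    fix x i assume "n \<le> i"
    have "f (inv f x) i = inv f x i" using lvl_high[OF assms \<open>n\<le>i\<close>] .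
    then show "inv f x i = x i" using fi by simp
  qed
  moreover have "\<forall>x y. (\<forall>i<n. x i = y i) \<longrightarrow> (\<forall>i<n. inv f x i = inv f y i)"
  proof (intro allI impI)
    fix x y :: point and i :: nat assume a: "\<forall>i<n. x i = y i" "i < n"
    define z where "z = (\<lambda>j. if j < n then inv f x j else y j)"
    have "f z = y"
    proof
      fix j show "f z j = y j"
      proof (cases "j < n")
        case True
        have "f z j = f (inv f x) j"
          by (rule lvl_dep[OF assms _ True]) (simp add: z_def)
        then show ?thesis using fi a(1) True by simp
      next
        case False
        then show ?thesis using lvl_high[OF assms] by (simp add: z_def)
      qed
    qed
    then have "z = inv f y" using bf by (metis bij_def inv_f_f)
    then show "inv f x i = inv f y i" using a(2) by (metis z_def)
  qed
  ultimately show ?thesis by (simp add: lvl_def)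
qed

lemma lvl_common:
  fixes g :: "nat \<Rightarrow> point \<Rightarrow> point" and N :: nat
  assumes "\<forall>i<N. g i \<in> S2inf"
  shows "\<exists>M. \<forall>i<N. lvl M (g i)"
  using assms
proof (induction N)
  case 0 then show ?case by simp
next
  case (Suc N)
  then obtain M where M: "\<forall>i<N. lvl M (g i)" by auto
  obtain m where m: "lvl m (g N)" using Suc.prems S2inf_iff by blast
  have "\<forall>i<Suc N. lvl (max M m) (g i)"
    using M m lvl_mono by (auto simp: less_Suc_eq)
  then show ?case by blast
qed

lemma chi_conj:
  assumes chi: "is_character chi" and p: "lvl n p" and q: "lvl n q" and g: "lvl n g"
    and pq: "p \<circ> q = id" and qp: "q \<circ> p = id"
  shows "chi (p \<circ> g \<circ> q) = chi g"
proof -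
  have "chi ((p \<circ> g) \<circ> q) = chi (q \<circ> (p \<circ> g))"
    using chi lvlI[OF lvl_comp[OF p g]] lvlI[OF q] by (simp add: is_character_def)
  also have "q \<circ> (p \<circ> g) = (q \<circ> p) \<circ> g" by (simp add: comp_assoc)
  also have "\<dots> = g" by (simp add: qp)
  finally show ?thesis .
qed

lemma chi_comm:
  assumes chi: "is_character chi" and "g \<in> S2inf" "h \<in> S2inf"
  shows "chi (g \<circ> h) = chi (h \<circ> g)"
  using assms by (simp add: is_character_def)

lemma chi_id: "is_character chi \<Longrightarrow> chi id = 1"
  by (simp add: is_character_def)

lemma chi_psd:
  fixes n :: nat and g :: "nat \<Rightarrow> point \<Rightarrow> point" and c :: "nat \<Rightarrow> complex"
  assumes "is_character chi" "\<forall>i<n. g i \<in> S2inf"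
  shows "Im (\<Sum>i<n. \<Sum>j<n. cnj (c i) * c j * chi (g i \<circ> inv (g j))) = 0"
    "Re (\<Sum>i<n. \<Sum>j<n. cnj (c i) * c j * chi (g i \<circ> inv (g j))) \<ge> 0"
proof -
  have "Im (\<Sum>i<n. \<Sum>j<n. cnj (c i) * c j * chi (g i \<circ> inv (g j))) = 0 \<and>
    Re (\<Sum>i<n. \<Sum>j<n. cnj (c i) * c j * chi (g i \<circ> inv (g j))) \<ge> 0"
    using assms(1)[unfolded is_character_def, THEN conjunct2, THEN conjunct1, rule_format, of n g c] assms(2)
    by (simp add: Let_def)
  then show "Im (\<Sum>i<n. \<Sum>j<n. cnj (c i) * c j * chi (g i \<circ> inv (g j))) = 0"
    "Re (\<Sum>i<n. \<Sum>j<n. cnj (c i) * c j * chi (g i \<circ> inv (g j))) \<ge> 0" by auto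
qed



definition dep :: "nat \<Rightarrow> point set \<Rightarrow> bool" where
  "dep N S \<longleftrightarrow> (\<forall>x y. (\<forall>i<N. x i = y i) \<longrightarrow> (x \<in> S \<longleftrightarrow> y \<in> S))"

definition indep :: "nat set \<Rightarrow> point set \<Rightarrow> bool" where
  "indep J S \<longleftrightarrow> (\<forall>x y. (\<forall>i. i \<notin> J \<longrightarrow> x i = y i) \<longrightarrow> (x \<in> S \<longleftrightarrow> y \<in> S))"

lemma depD: "dep N S \<Longrightarrow> (\<forall>i<N. x i = y i) \<Longrightarrow> (x \<in> S \<longleftrightarrow> y \<in> S)"
  by (simp add: dep_def)

lemma indepD: "indep J S \<Longrightarrow> (\<forall>i. i \<notin> J \<longrightarrow> x i = y i) \<Longrightarrow> (x \<in> S \<longleftrightarrow> y \<in> S)"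
  unfolding indep_def by blast

lemma indep_upd: assumes "indep J S" "j \<in> J" shows "(x(j := v) \<in> S) = (x \<in> S)"
proof -
  have "\<forall>i. i \<notin> J \<longrightarrow> (x(j := v)) i = x i" using assms(2) by auto
  then show ?thesis by (rule indepD[OF assms(1)])
qed

lemma indep_mono: assumes "indep K S" "J \<subseteq> K" shows "indep J S"
  unfolding indep_def
proof (intro allI impI)
  fix x y :: point assume "\<forall>i. i \<notin> J \<longrightarrow> x i = y i"
  then have "\<forall>i. i \<notin> K \<longrightarrow> x i = y i" using assms(2) by blast
  then show "x \<in> S \<longleftrightarrow> y \<in> S" by (rule indepD[OF assms(1)])
qed

lemma inv_invol: "f \<circ> f = id \<Longrightarrow> inv f = f"
  by (rule inv_unique_comp) auto

lemma sA_invol: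
  assumes "indep {j} S" shows "sA S j \<circ> sA S j = id"
proof
  fix x
  show "(sA S j \<circ> sA S j) x = id x"
  proof (cases "x \<in> S")
    case True then show ?thesis by (simp add: sA_def)
  next
    case False
    then have "x(j := \<not> x j) \<notin> S" using indep_upd[OF assms, of j x] by simp
    then show ?thesis using False by (simp add: sA_def)
  qed
qed

lemma sA_lvl:
  assumes d: "dep N S" and j: "j < N" and ind: "indep {j} S"
  shows "lvl N (sA S j)"
proof -
  have "bij (sA S j)" by (rule o_bij[OF sA_invol[OF ind] sA_invol[OF ind]])
  moreover have "\<forall>x i. N \<le> i \<longrightarrow> sA S j x i = x i" using j by (auto simp: sA_def)
  moreover have "\<forall>x y. (\<forall>i<N. x i = y i) \<longrightarrow> (\<forall>i<N. sA S j x i = sA S j y i)"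
  proof (intro allI impI)
    fix x y :: point and i :: nat assume a: "\<forall>i<N. x i = y i" "i < N"
    have "x \<in> S \<longleftrightarrow> y \<in> S" by (rule depD[OF d a(1)])
    then show "sA S j x i = sA S j y i" using a j by (auto simp: sA_def)
  qed
  ultimately show ?thesis by (simp add: lvl_def)
qed

definition cperm :: "(nat \<Rightarrow> nat) \<Rightarrow> point \<Rightarrow> point" where
  "cperm \<sigma> x = x \<circ> \<sigma>"

lemma cperm_invol: assumes "\<sigma> \<circ> \<sigma> = id" shows "cperm \<sigma> \<circ> cperm \<sigma> = id"
proof
  fix x :: point
  show "(cperm \<sigma> \<circ> cperm \<sigma>) x = id x"
  proof
    fix i
    have "\<sigma> (\<sigma> i) = i" using fun_cong[OF assms, of i] by simp
    then show "(cperm \<sigma> \<circ> cperm \<sigma>) x i = id x i" by (simp add: cperm_def)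
  qed
qed

lemma invol_low:
  fixes \<sigma> :: "nat \<Rightarrow> nat"
  assumes "\<sigma> \<circ> \<sigma> = id" "\<forall>i\<ge>N. \<sigma> i = i" "i < N" shows "\<sigma> i < N"
proof (rule ccontr)
  assume "\<not> \<sigma> i < N"
  then have "N \<le> \<sigma> i" by simp
  then have "\<sigma> (\<sigma> i) = \<sigma> i" using assms(2) by blast
  moreover have "\<sigma> (\<sigma> i) = i" using fun_cong[OF assms(1), of i] by simp
  ultimately show False using assms(3) \<open>\<not> \<sigma> i < N\<close> by simp
qed

lemma cperm_lvl:
  assumes inv: "\<sigma> \<circ> \<sigma> = id" and hi: "\<forall>i\<ge>N. \<sigma> i = i"
  shows "lvl N (cperm \<sigma>)"
proof -
  have "bij (cperm \<sigma>)" by (rule o_bij[OF cperm_invol[OF inv] cperm_invol[OF inv]])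
  moreover have "\<forall>x i. N \<le> i \<longrightarrow> cperm \<sigma> x i = x i" using hi by (simp add: cperm_def)
  moreover have "\<forall>x y. (\<forall>i<N. x i = y i) \<longrightarrow> (\<forall>i<N. cperm \<sigma> x i = cperm \<sigma> y i)"
  proof (intro allI impI)
    fix x y :: point and i :: nat assume a: "\<forall>i<N. x i = y i" "i < N"
    have "\<sigma> i < N" by (rule invol_low[OF inv hi a(2)])
    then show "cperm \<sigma> x i = cperm \<sigma> y i" using a(1) by (simp add: cperm_def)
  qed
  ultimately show ?thesis by (simp add: lvl_def)
qed

definition tr :: "nat \<Rightarrow> nat \<Rightarrow> nat \<Rightarrow> nat" where
  "tr a b i = (if i = a then b else if i = b then a else i)"

lemma tr_invol: "tr a b \<circ> tr a b = id"
  by (auto simp: tr_def fun_eq_iff)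

lemma chi_sA_swap:
  assumes chi: "is_character chi" and d: "dep N S" and j: "j < N" and j': "j' < N"
    and ind: "indep {j, j'} S"
  shows "chi (sA S j) = chi (sA S j')"
proof -
  let ?P = "cperm (tr j j')"
  have hi: "\<forall>i\<ge>N. tr j j' i = i" using j j' by (auto simp: tr_def)
  have lP: "lvl N ?P" by (rule cperm_lvl[OF tr_invol hi])
  have PP: "?P \<circ> ?P = id" by (rule cperm_invol[OF tr_invol])
  have indj1: "indep {j} S" by (rule indep_mono[OF ind]) simp
  have indj2: "indep {j'} S" by (rule indep_mono[OF ind]) simp
  note indj = indj1 indj2
  have lS: "lvl N (sA S j)" by (rule sA_lvl[OF d j indj(1)])
  have mem: "(x \<circ> tr j j' \<in> S) = (x \<in> S)" for x
    by (rule indepD[OF ind]) (auto simp: tr_def)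
  have eq: "?P \<circ> sA S j \<circ> ?P = sA S j'"
  proof
    fix x
    show "(?P \<circ> sA S j \<circ> ?P) x = sA S j' x"
    proof (cases "x \<in> S")
      case True
      have e: "x \<circ> tr j j' \<circ> tr j j' = x \<circ> (tr j j' \<circ> tr j j')" by (simp add: comp_assoc)
      show ?thesis using True mem[of x] by (simp add: sA_def cperm_def e tr_invol)
    next
      case False
      then have "x \<circ> tr j j' \<notin> S" using mem[of x] by simp
      then have "(?P \<circ> sA S j \<circ> ?P) x = ((x \<circ> tr j j')(j := \<not> (x \<circ> tr j j') j)) \<circ> tr j j'"
        by (simp add: sA_def cperm_def)
      also have "\<dots> = x(j' := \<not> x j')" by (intro ext) (simp add: tr_def)
      finally show ?thesis using False by (simp add: sA_def)
    qed
  qed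
  have "chi (?P \<circ> sA S j \<circ> ?P) = chi (sA S j)"
    by (rule chi_conj[OF chi lP lP lS PP PP])
  with eq show ?thesis by simp
qed

definition pconj :: "point set \<Rightarrow> point set \<Rightarrow> nat \<Rightarrow> nat \<Rightarrow> point \<Rightarrow> point" where
  "pconj B D j m x = (if x \<notin> B \<and> x \<notin> D then x(m := (x j \<noteq> x m))
     else if x \<in> B \<and> x \<notin> D then x(j := x m, m := x j) else x)"

lemma chi_two_flip:
  assumes chi: "is_character chi" and jm: "j \<noteq> m" and dB: "dep N B" and dD: "dep N D"
    and j: "j < N" and m: "m < N" and iB: "indep {j, m} B" and iD: "indep {j, m} D"
  shows "chi (sA B j \<circ> sA D m) = chi (sA (B \<inter> D) j)"
proof -
  let ?p = "pconj B D j m"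
  have uB: "(x(j := v) \<in> B) = (x \<in> B)" "(x(m := v) \<in> B) = (x \<in> B)" for x v
    using indep_upd[OF iB] by auto
  have uD: "(x(j := v) \<in> D) = (x \<in> D)" "(x(m := v) \<in> D) = (x \<in> D)" for x v
    using indep_upd[OF iD] by auto
  have pp: "?p \<circ> ?p = id"
  proof
    fix x
    consider (n) "x \<notin> B" "x \<notin> D" | (b) "x \<in> B" "x \<notin> D" | (o) "x \<in> D" by blast
    then show "(?p \<circ> ?p) x = id x"
    proof cases
      case n
      let ?y = "x(m := (x j \<noteq> x m))"
      have py: "?p x = ?y" using n by (simp add: pconj_def)
      have "?y \<notin> B" "?y \<notin> D" using n uB uD by simp_all
      then have "?p ?y = ?y(m := (?y j \<noteq> ?y m))" by (simp add: pconj_def)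
      also have "\<dots> = x" using jm by (intro ext) auto
      finally show ?thesis using py by simp
    next
      case b
      let ?y = "x(j := x m, m := x j)"
      have py: "?p x = ?y" using b by (simp add: pconj_def)
      have "?y \<in> B" "?y \<notin> D" using b uB uD by simp_all
      then have "?p ?y = ?y(j := ?y m, m := ?y j)" by (simp add: pconj_def)
      also have "\<dots> = x" using jm by (intro ext) auto
      finally show ?thesis using py by simp
    next
      case o
      then show ?thesis by (simp add: pconj_def)
    qed
  qed
  have lp: "lvl N ?p"
  proof -
    have "bij ?p" by (rule o_bij[OF pp pp])
    moreover have "\<forall>x i. N \<le> i \<longrightarrow> ?p x i = x i" using j m by (auto simp: pconj_def)
    moreover have "\<forall>x y. (\<forall>i<N. x i = y i) \<longrightarrow> (\<forall>i<N. ?p x i = ?p y i)"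
    proof (intro allI impI)
      fix x y :: point and i :: nat assume a: "\<forall>i<N. x i = y i" "i < N"
      have "x \<in> B \<longleftrightarrow> y \<in> B" by (rule depD[OF dB a(1)])
      moreover have "x \<in> D \<longleftrightarrow> y \<in> D" by (rule depD[OF dD a(1)])
      ultimately show "?p x i = ?p y i" using a j m by (auto simp: pconj_def)
    qed
    ultimately show ?thesis by (simp add: lvl_def)
  qed
  have indB1: "indep {j} B" by (rule indep_mono[OF iB]) simp
  have indD1: "indep {m} D" by (rule indep_mono[OF iD]) simp
  note indBj = indB1 indD1
  have indBD: "indep {j} (B \<inter> D)"
    unfolding indep_def
  proof (intro allI impI)
    fix x y :: point assume a: "\<forall>i. i \<notin> {j} \<longrightarrow> x i = y i"
    then have "\<forall>i. i \<notin> {j, m} \<longrightarrow> x i = y i" by simp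
    then show "x \<in> B \<inter> D \<longleftrightarrow> y \<in> B \<inter> D" using indepD[OF iB] indepD[OF iD] by blast
  qed
  have ly: "lvl N (sA B j \<circ> sA D m)"
    by (rule lvl_comp[OF sA_lvl[OF dB j indBj(1)] sA_lvl[OF dD m indBj(2)]])
  have eq: "?p \<circ> (sA B j \<circ> sA D m) \<circ> ?p = sA (B \<inter> D) j"
  proof
    fix x
    consider (n) "x \<notin> B" "x \<notin> D" | (b) "x \<in> B" "x \<notin> D" | (d) "x \<notin> B" "x \<in> D"
       | (bd) "x \<in> B" "x \<in> D" by blast
    then show "(?p \<circ> (sA B j \<circ> sA D m) \<circ> ?p) x = sA (B \<inter> D) j x"
    proof cases
      case n
      let ?y = "x(m := (x j \<noteq> x m))"
      have py: "?p x = ?y" using n by (simp add: pconj_def)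
      have y: "?y \<notin> B" "?y \<notin> D" using n uB uD by simp_all
      let ?z = "?y(m := \<not> ?y m)"
      have z: "?z \<notin> B" "?z \<notin> D" using y uB uD by simp_all
      have sz: "(sA B j \<circ> sA D m) ?y = ?z(j := \<not> ?z j)" using y z by (simp add: sA_def)
      let ?w = "?z(j := \<not> ?z j)"
      have w: "?w \<notin> B" "?w \<notin> D" using z uB uD by simp_all
      have "?p ?w = ?w(m := (?w j \<noteq> ?w m))" using w by (simp add: pconj_def)
      also have "\<dots> = x(j := \<not> x j)" using jm by (intro ext) auto
      finally have c: "?p ((sA B j \<circ> sA D m) (?p x)) = x(j := \<not> x j)" using py sz by simp
      have rhs: "sA (B \<inter> D) j x = x(j := \<not> x j)" using n by (simp add: sA_def)
      show ?thesis using c rhs by simp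
    next
      case b
      let ?y = "x(j := x m, m := x j)"
      have py: "?p x = ?y" using b by (simp add: pconj_def)
      have y: "?y \<in> B" "?y \<notin> D" using b uB uD by simp_all
      let ?z = "?y(m := \<not> ?y m)"
      have z: "?z \<in> B" "?z \<notin> D" using y uB uD by simp_all
      have sz: "(sA B j \<circ> sA D m) ?y = ?z" using y z by (simp add: sA_def)
      have "?p ?z = ?z(j := ?z m, m := ?z j)" using z by (simp add: pconj_def)
      also have "\<dots> = x(j := \<not> x j)" using jm by (intro ext) auto
      finally have c: "?p ((sA B j \<circ> sA D m) (?p x)) = x(j := \<not> x j)" using py sz by simp
      have rhs: "sA (B \<inter> D) j x = x(j := \<not> x j)" using b by (simp add: sA_def)
      show ?thesis using c rhs by simp
    next
      case d
      have py: "?p x = x" using d by (simp add: pconj_def)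
      let ?z = "x(j := \<not> x j)"
      have z: "?z \<notin> B" "?z \<in> D" using d uB uD by simp_all
      have sz: "(sA B j \<circ> sA D m) x = ?z" using d by (simp add: sA_def)
      have "?p ?z = ?z" using z by (simp add: pconj_def)
      then have c: "?p ((sA B j \<circ> sA D m) (?p x)) = x(j := \<not> x j)" using py sz by simp
      have rhs: "sA (B \<inter> D) j x = x(j := \<not> x j)" using d by (simp add: sA_def)
      show ?thesis using c rhs by simp
    next
      case bd
      have py: "?p x = x" using bd by (simp add: pconj_def)
      have sz: "(sA B j \<circ> sA D m) x = x" using bd by (simp add: sA_def)
      have rhs: "sA (B \<inter> D) j x = x" using bd by (simp add: sA_def)
      show ?thesis using py sz rhs by simp
    qed
  qed
  have "chi (?p \<circ> (sA B j \<circ> sA D m) \<circ> ?p) = chi (sA B j \<circ> sA D m)"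
    by (rule chi_conj[OF chi lp lp ly pp pp])
  with eq show ?thesis by simp
qed



definition blk :: "nat \<Rightarrow> nat \<Rightarrow> bool list set \<Rightarrow> point set" where
  "blk a b C = {x. map x [a..<b] \<in> C}"

lemma cyl_blk: "cyl K C = blk 0 K C" by (simp add: cyl_def blk_def)

lemma blk_dep: assumes "b \<le> N" shows "dep N (blk a b C)"
  unfolding dep_def
proof (intro allI impI)
  fix x y :: point assume "\<forall>i<N. x i = y i"
  then have e: "map x [a..<b] = map y [a..<b]" using assms by (intro map_cong) auto
  show "x \<in> blk a b C \<longleftrightarrow> y \<in> blk a b C" unfolding blk_def mem_Collect_eq e by simp
qed

lemma blk_indep: assumes "\<forall>j\<in>J. j < a \<or> b \<le> j" shows "indep J (blk a b C)"
  unfolding indep_def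
proof (intro allI impI)
  fix x y :: point assume h: "\<forall>i. i \<notin> J \<longrightarrow> x i = y i"
  have "map x [a..<b] = map y [a..<b]"
  proof (intro map_cong refl)
    fix i assume "i \<in> set [a..<b]"
    then have "i \<notin> J" using assms by auto
    then show "x i = y i" using h by blast
  qed
  note e = this
  show "x \<in> blk a b C \<longleftrightarrow> y \<in> blk a b C" unfolding blk_def mem_Collect_eq e by simp
qed

lemma cyl_dep: "K \<le> N \<Longrightarrow> dep N (cyl K C)"
  unfolding cyl_blk by (rule blk_dep)

lemma cyl_indep: "\<forall>j\<in>J. K \<le> j \<Longrightarrow> indep J (cyl K C)"
  unfolding cyl_blk by (rule blk_indep) auto

lemma lvl_upd:
  assumes "lvl n f" "n \<le> i"
  shows "f (x(i := v)) = (f x)(i := v)"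
proof
  fix j
  show "f (x(i := v)) j = ((f x)(i := v)) j"
  proof (cases "j < n")
    case True
    have "f (x(i := v)) j = f x j"
      by (rule lvl_dep[OF assms(1) _ True]) (use assms(2) in auto)
    then show ?thesis using True assms(2) by simp
  next
    case False
    then show ?thesis using lvl_high[OF assms(1)] by simp
  qed
qed

lemma two_sum_expand:
  fixes f :: "nat \<Rightarrow> nat \<Rightarrow> complex"
  shows "(\<Sum>i<2. \<Sum>j<2. f i j) = f 0 0 + f 0 1 + f 1 0 + f 1 1"
  by (simp add: numeral_2_eq_2)

lemma chi_invol_real:
  assumes chi: "is_character chi" and l: "lvl n s" and ss: "s \<circ> s = id"
  shows "Im (chi s) = 0" "\<bar>Re (chi s)\<bar> \<le> 1"
proof -
  have hs: "inv s = s" by (rule inv_invol[OF ss])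
  define g where "g = (\<lambda>i::nat. if i = 0 then id else s)"
  have gS: "\<forall>i<2. g i \<in> S2inf" using lvlI[OF l] lvlI[OF lvl_id] by (auto simp: g_def)
  have val: "(\<Sum>i<2. \<Sum>j<2. cnj (c i) * c j * chi (g i \<circ> inv (g j))) =
     cnj (c 0) * c 0 + cnj (c 0) * c 1 * chi s + cnj (c 1) * c 0 * chi s + cnj (c 1) * c 1" for c
    unfolding two_sum_expand using chi_id[OF chi] by (simp add: g_def hs ss)
  have p1: "Im (2 + 2 * chi s) = 0" "Re (2 + 2 * chi s) \<ge> 0"
    using chi_psd[OF chi gS, of "\<lambda>_. 1"] unfolding val by simp_all
  have p2: "Re (2 - 2 * chi s) \<ge> 0"
    using chi_psd[OF chi gS, of "\<lambda>i. if i = 0 then 1 else -1"] unfolding val by simp_all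
  show "Im (chi s) = 0" using p1 by simp
  show "\<bar>Re (chi s)\<bar> \<le> 1" using p1 p2 by simp
qed

lemma card_app:
  assumes "P \<subseteq> Xn a" "Q \<subseteq> Xn b"
  shows "card {xs. length xs = a + b \<and> take a xs \<in> P \<and> drop a xs \<in> Q} = card P * card Q"
proof -
  have "bij_betw (\<lambda>(u, v). u @ v) (P \<times> Q) {xs. length xs = a + b \<and> take a xs \<in> P \<and> drop a xs \<in> Q}"
  proof (rule bij_betw_imageI)
    show "inj_on (\<lambda>(u, v). u @ v) (P \<times> Q)"
    proof (rule inj_onI, clarify)
      fix u v u' v' assume "u \<in> P" "v \<in> Q" "u' \<in> P" "v' \<in> Q" "u @ v = u' @ v'"
      moreover have "length u = a" "length u' = a" using assms \<open>u \<in> P\<close> \<open>u' \<in> P\<close> by (auto simp: Xn_def)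
      ultimately show "u = u' \<and> v = v'" by simp
    qed
    show "(\<lambda>(u, v). u @ v) ` (P \<times> Q) = {xs. length xs = a + b \<and> take a xs \<in> P \<and> drop a xs \<in> Q}"
    proof (rule set_eqI, rule iffI)
      fix xs assume "xs \<in> (\<lambda>(u, v). u @ v) ` (P \<times> Q)"
      then obtain u v where "u \<in> P" "v \<in> Q" "xs = u @ v" by auto
      moreover have "length u = a" "length v = b" using assms \<open>u \<in> P\<close> \<open>v \<in> Q\<close> by (auto simp: Xn_def)
      ultimately show "xs \<in> {xs. length xs = a + b \<and> take a xs \<in> P \<and> drop a xs \<in> Q}" by simp
    next
      fix xs assume "xs \<in> {xs. length xs = a + b \<and> take a xs \<in> P \<and> drop a xs \<in> Q}"
      then have "take a xs \<in> P" "drop a xs \<in> Q" "xs = take a xs @ drop a xs" by auto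
      then show "xs \<in> (\<lambda>(u, v). u @ v) ` (P \<times> Q)" by (intro image_eqI[of _ _ "(take a xs, drop a xs)"]) auto
    qed
  qed
  then have "card (P \<times> Q) = card {xs. length xs = a + b \<and> take a xs \<in> P \<and> drop a xs \<in> Q}"
    by (rule bij_betw_same_card)
  then show ?thesis by (simp add: card_cartesian_product)
qed

lemma exists_card_subset:
  assumes "n \<le> 2 ^ K" shows "\<exists>C. C \<subseteq> Xn K \<and> card C = n"
proof -
  have "n \<le> card (Xn K)" using assms card_Xn by simp
  then obtain C where "C \<subseteq> Xn K" "card C = n" "finite C" by (rule obtain_subset_with_card_n)
  then show ?thesis by blast
qed

lemma card_le_Xn: "C \<subseteq> Xn K \<Longrightarrow> card C \<le> 2 ^ K"
  using card_mono[OF finite_Xn, of C] card_Xn by simp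

definition G :: "((point \<Rightarrow> point) \<Rightarrow> complex) \<Rightarrow> nat \<Rightarrow> nat \<Rightarrow> real" where
  "G chi K n = Re (chi (sA (cyl K (SOME C. C \<subseteq> Xn K \<and> card C = n)) K))"

lemma sA_cyl_lvl: "K \<le> i \<Longrightarrow> i < N \<Longrightarrow> lvl N (sA (cyl K C) i)"
  by (rule sA_lvl[OF cyl_dep]) (auto intro: cyl_indep)

lemma sA_cyl_invol: "K \<le> i \<Longrightarrow> sA (cyl K C) i \<circ> sA (cyl K C) i = id"
  by (rule sA_invol) (auto intro: cyl_indep)

lemma chi_perm_cyl:
  assumes chi: "is_character chi" and C: "C \<subseteq> Xn K" and C0: "C0 \<subseteq> Xn K" and cc: "card C = card C0"
  shows "chi (sA (cyl K C) K) = chi (sA (cyl K C0) K)"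
proof -
  have fC: "finite C" "finite C0" using finite_subset[OF C finite_Xn] finite_subset[OF C0 finite_Xn] by auto
  obtain h1 where h1: "bij_betw h1 C C0" using finite_same_card_bij[OF fC cc] by blast
  have c2: "card (Xn K - C) = card (Xn K - C0)"
    using card_Diff_subset[OF fC(1) C] card_Diff_subset[OF fC(2) C0] cc by simp
  have fD: "finite (Xn K - C)" "finite (Xn K - C0)" by simp_all
  obtain h2 where h2: "bij_betw h2 (Xn K - C) (Xn K - C0)"
    using finite_same_card_bij[OF fD c2] by blast
  define p0 where "p0 = (\<lambda>xs. if xs \<in> C then h1 xs else h2 xs)"
  have "bij_betw p0 (C \<union> (Xn K - C)) (C0 \<union> (Xn K - C0))"
    unfolding p0_def by (rule bij_betw_disjoint_Un[OF h1 h2]) auto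
  moreover have "C \<union> (Xn K - C) = Xn K" "C0 \<union> (Xn K - C0) = Xn K" using C C0 by auto
  ultimately have bp: "bij_betw p0 (Xn K) (Xn K)" by simp
  have pC: "\<And>ys. ys \<in> Xn K \<Longrightarrow> (p0 ys \<in> C0 \<longleftrightarrow> ys \<in> C)"
  proof -
    fix ys assume ys: "ys \<in> Xn K"
    show "p0 ys \<in> C0 \<longleftrightarrow> ys \<in> C"
    proof (cases "ys \<in> C")
      case True then show ?thesis using bij_betwE[OF h1] by (simp add: p0_def)
    next
      case False then show ?thesis using bij_betwE[OF h2] ys by (auto simp: p0_def)
    qed
  qed
  define q0 where "q0 = inv_into (Xn K) p0"
  have bq: "bij_betw q0 (Xn K) (Xn K)" unfolding q0_def by (rule bij_betw_inv_into[OF bp])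
  have qC: "q0 ys \<in> C \<longleftrightarrow> ys \<in> C0" if ys: "ys \<in> Xn K" for ys
  proof -
    have "q0 ys \<in> Xn K" using bij_betwE[OF bq] ys by blast
    moreover have "p0 (q0 ys) = ys" unfolding q0_def using bp ys by (simp add: bij_betw_inv_into_right)
    ultimately show ?thesis using pC[of "q0 ys"] by simp
  qed
  let ?P = "act K p0" and ?Q = "act K q0"
  have PQ: "?P \<circ> ?Q = id" "?Q \<circ> ?P = id" using act_inv[OF bp] by (simp_all add: q0_def)
  have lP: "lvl (Suc K) ?P" by (rule lvl_mono[OF act_lvl[OF bp]]) simp
  have lQ: "lvl (Suc K) ?Q" by (rule lvl_mono[OF act_lvl[OF bq]]) simp
  have lQ0: "lvl K ?Q" by (rule act_lvl[OF bq])
  have lP0: "lvl K ?P" by (rule act_lvl[OF bp])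
  have lS: "lvl (Suc K) (sA (cyl K C) K)" by (rule sA_cyl_lvl) auto
  have mapQ: "map (?Q x) [0..<K] = q0 (map x [0..<K])" for x
    by (rule map_act) (use bij_betwE[OF bq] in \<open>auto simp: Xn_def\<close>)
  have eq: "?P \<circ> sA (cyl K C) K \<circ> ?Q = sA (cyl K C0) K"
  proof
    fix x
    have mx: "map x [0..<K] \<in> Xn K" by (simp add: Xn_def)
    have mem: "?Q x \<in> cyl K C \<longleftrightarrow> x \<in> cyl K C0"
      unfolding cyl_def using qC[OF mx] mapQ[of x] by simp
    have PQx: "?P (?Q x) = x" using fun_cong[OF PQ(1), of x] by simp
    show "(?P \<circ> sA (cyl K C) K \<circ> ?Q) x = sA (cyl K C0) K x"
    proof (cases "x \<in> cyl K C0")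
      case True
      then show ?thesis using mem PQx by (simp add: sA_def)
    next
      case False
      have QK: "?Q x K = x K" by (rule lvl_high[OF lQ0]) simp
      have "(?P \<circ> sA (cyl K C) K \<circ> ?Q) x = ?P ((?Q x)(K := \<not> ?Q x K))"
        using False mem by (simp add: sA_def)
      also have "\<dots> = (?P (?Q x))(K := \<not> ?Q x K)" by (rule lvl_upd[OF lP0]) simp
      also have "\<dots> = x(K := \<not> x K)" using PQx QK by simp
      finally show ?thesis using False by (simp add: sA_def)
    qed
  qed
  have "chi (?P \<circ> sA (cyl K C) K \<circ> ?Q) = chi (sA (cyl K C) K)"
    by (rule chi_conj[OF chi lP lQ lS PQ])
  with eq show ?thesis by simp
qed

lemma Gval:
  assumes chi: "is_character chi" and C: "C \<subseteq> Xn K" and i: "K \<le> i"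
  shows "chi (sA (cyl K C) i) = complex_of_real (G chi K (card C))"
proof -
  have "\<exists>C0. C0 \<subseteq> Xn K \<and> card C0 = card C" using C by blast
  note sx = someI_ex[OF this]
  have C0: "(SOME C0. C0 \<subseteq> Xn K \<and> card C0 = card C) \<subseteq> Xn K"
    "card (SOME C0. C0 \<subseteq> Xn K \<and> card C0 = card C) = card C"
    using sx by simp_all
  have "chi (sA (cyl K C) i) = chi (sA (cyl K C) K)"
    by (rule chi_sA_swap[OF chi cyl_dep[of K "Suc i"]]) (use i in \<open>auto intro: cyl_indep\<close>)
  also have "\<dots> = chi (sA (cyl K (SOME C0. C0 \<subseteq> Xn K \<and> card C0 = card C)) K)"
    by (rule chi_perm_cyl[OF chi C C0(1) C0(2)[symmetric]])
  finally have e: "chi (sA (cyl K C) i) = chi (sA (cyl K (SOME C0. C0 \<subseteq> Xn K \<and> card C0 = card C)) K)" .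
  have "Im (chi (sA (cyl K C) i)) = 0"
    by (rule chi_invol_real(1)[OF chi sA_cyl_lvl[of K i "Suc i"] sA_cyl_invol]) (use i in auto)
  then show ?thesis using e by (simp add: G_def complex_eq_iff)
qed

lemma G_bound:
  assumes chi: "is_character chi" and n: "n \<le> 2 ^ K"
  shows "\<bar>G chi K n\<bar> \<le> 1"
proof -
  obtain C where C: "C \<subseteq> Xn K" "card C = n" using exists_card_subset[OF n] by blast
  have "\<bar>Re (chi (sA (cyl K C) K))\<bar> \<le> 1"
    by (rule chi_invol_real(2)[OF chi sA_cyl_lvl[of K K "Suc K"] sA_cyl_invol]) auto
  then show ?thesis using Gval[OF chi C(1) order.refl] C(2) by simp
qed

lemma cyl_lift:
  assumes "C \<subseteq> Xn K"
  shows "cyl K C = cyl (K + j) {xs. length xs = K + j \<and> take K xs \<in> C \<and> drop K xs \<in> Xn j}"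
  by (auto simp: cyl_def take_map Xn_def min_def)

lemma G_lift:
  assumes chi: "is_character chi" and n: "n \<le> 2 ^ K"
  shows "G chi (K + j) (n * 2 ^ j) = G chi K n"
proof -
  obtain C where C: "C \<subseteq> Xn K" "card C = n" using exists_card_subset[OF n] by blast
  let ?C' = "{xs. length xs = K + j \<and> take K xs \<in> C \<and> drop K xs \<in> Xn j}"
  have cC': "card ?C' = n * 2 ^ j" using card_app[OF C(1) order.refl] C(2) card_Xn by simp
  have sub: "?C' \<subseteq> Xn (K + j)" by (auto simp: Xn_def)
  have "complex_of_real (G chi K n) = chi (sA (cyl K C) (K + j))"
    using Gval[OF chi C(1), of "K + j"] C(2) by simp
  also have "\<dots> = chi (sA (cyl (K + j) ?C') (K + j))" using cyl_lift[OF C(1), of j] by simp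
  also have "\<dots> = complex_of_real (G chi (K + j) (n * 2 ^ j))"
    using Gval[OF chi sub order.refl] cC' by simp
  finally show ?thesis by simp
qed

lemma cyl_full: "cyl K (Xn K) = UNIV" by (simp add: cyl_def Xn_def)

lemma sA_UNIV: "sA UNIV j = id" by (simp add: sA_def fun_eq_iff)

lemma G_full:
  assumes chi: "is_character chi" shows "G chi K (2 ^ K) = 1"
  using Gval[OF chi order.refl order.refl] chi_id[OF chi] by (simp add: cyl_full sA_UNIV card_Xn)



definition psd :: "((point \<Rightarrow> point) \<Rightarrow> complex) \<Rightarrow> bool" where
  "psd psi \<longleftrightarrow> (\<forall>(n::nat) (g :: nat \<Rightarrow> point \<Rightarrow> point) (c :: nat \<Rightarrow> complex).
        (\<forall>i<n. g i \<in> S2inf) \<longrightarrow>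
        Im (\<Sum>i<n. \<Sum>j<n. cnj (c i) * c j * psi (g i \<circ> inv (g j))) = 0 \<and>
        Re (\<Sum>i<n. \<Sum>j<n. cnj (c i) * c j * psi (g i \<circ> inv (g j))) \<ge> 0)"

lemma char_psd: "is_character chi \<Longrightarrow> psd chi"
  unfolding psd_def using chi_psd by blast

lemma psdD:
  fixes n :: nat and g :: "nat \<Rightarrow> point \<Rightarrow> point" and c :: "nat \<Rightarrow> complex"
  assumes "psd psi" "\<forall>i<n. g i \<in> S2inf"
  shows "Im (\<Sum>i<n. \<Sum>j<n. cnj (c i) * c j * psi (g i \<circ> inv (g j))) = 0"
    "Re (\<Sum>i<n. \<Sum>j<n. cnj (c i) * c j * psi (g i \<circ> inv (g j))) \<ge> 0"
  using assms(1)[unfolded psd_def, rule_format, of n g c] assms(2) by auto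

lemma bij_comp_inv: "bij g \<Longrightarrow> g \<circ> inv g = id"
  using bij_is_surj surj_iff by blast

lemma psd_zero:
  assumes p: "psd psi" and z: "psi id = 0" and g: "g \<in> S2inf"
  shows "psi g = 0"
proof -
  obtain n where ln: "lvl n g" using g S2inf_iff by blast
  have bg: "bij g" using lvl_bij[OF ln] .
  define h where "h = (\<lambda>i::nat. if i = 0 then id else g)"
  have hS: "\<forall>i<2. h i \<in> S2inf" using g lvlI[OF lvl_id] by (auto simp: h_def)
  let ?a = "psi (inv g)" and ?b = "psi g"
  have val: "(\<Sum>i<2. \<Sum>j<2. cnj (c i) * c j * psi (h i \<circ> inv (h j))) =
      cnj (c 0) * c 1 * ?a + cnj (c 1) * c 0 * ?b" for c
    unfolding two_sum_expand using z bij_comp_inv[OF bg] by (simp add: h_def)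
  have q1: "Im (?a + ?b) = 0" "Re (?a + ?b) \<ge> 0"
    using psdD[OF p hS, of "\<lambda>_. 1"] unfolding val by simp_all
  have q2: "Re (- (?a + ?b)) \<ge> 0"
    using psdD(2)[OF p hS, of "\<lambda>i. if i = 0 then 1 else -1"] unfolding val by simp
  have q3: "Im (\<i> * ?a - \<i> * ?b) = 0" "Re (\<i> * ?a - \<i> * ?b) \<ge> 0"
    using psdD[OF p hS, of "\<lambda>i. if i = 0 then 1 else \<i>"] unfolding val by simp_all
  have q4: "Re (- \<i> * ?a + \<i> * ?b) \<ge> 0"
    using psdD(2)[OF p hS, of "\<lambda>i. if i = 0 then 1 else - \<i>"] unfolding val by simp
  have "Re ?a + Re ?b = 0" "Im ?a + Im ?b = 0" "Re ?a - Re ?b = 0" "Im ?a - Im ?b = 0"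
    using q1 q2 q3 q4 by simp_all
  then show ?thesis by (simp add: complex_eq_iff)
qed

lemma sum_split2:
  fixes F :: "nat \<Rightarrow> 'a::comm_monoid_add"
  shows "(\<Sum>a<N+N. F a) = (\<Sum>a<N. F a) + (\<Sum>a<N. F (a + N))"
proof -
  have "(\<Sum>a<N+N. F a) = sum F {0..<N} + sum F {N..<N+N}"
    by (simp add: atLeast0LessThan[symmetric] sum.atLeastLessThan_concat)
  also have "sum F {N..<N+N} = sum F {0+N..<N+N}" by simp
  also have "\<dots> = (\<Sum>a<N. F (a + N))"
    by (simp only: sum.shift_bounds_nat_ivl atLeast0LessThan)
  finally show ?thesis by (simp add: atLeast0LessThan)
qed

lemma sum_split22:
  fixes F :: "nat \<Rightarrow> nat \<Rightarrow> 'a::comm_monoid_add"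
  shows "(\<Sum>a<N+N. \<Sum>b<N+N. F a b) =
    (\<Sum>i<N. \<Sum>j<N. F i j + F i (j + N) + F (i + N) j + F (i + N) (j + N))"
  by (simp add: sum_split2 sum.distrib add_ac)

lemma char_of_psd:
  assumes "\<forall>g\<in>S2inf. \<forall>h\<in>S2inf. psi (g \<circ> h) = psi (h \<circ> g)" "psd psi" "psi id = 1"
  shows "is_character psi"
  using assms unfolding is_character_def psd_def Let_def by blast

lemma psd_scale:
  assumes p: "psd psi" and s: "0 < s"
  shows "psd (\<lambda>x. complex_of_real s * psi x)"
  unfolding psd_def
proof (intro allI impI)
  fix n :: nat and g :: "nat \<Rightarrow> point \<Rightarrow> point" and c :: "nat \<Rightarrow> complex"
  assume gS: "\<forall>i<n. g i \<in> S2inf"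
  have eq: "(\<Sum>i<n. \<Sum>j<n. cnj (c i) * c j * (complex_of_real s * psi (g i \<circ> inv (g j)))) =
      complex_of_real s * (\<Sum>i<n. \<Sum>j<n. cnj (c i) * c j * psi (g i \<circ> inv (g j)))"
    by (simp add: sum_distrib_left algebra_simps)
  show "Im (\<Sum>i<n. \<Sum>j<n. cnj (c i) * c j * (complex_of_real s * psi (g i \<circ> inv (g j)))) = 0 \<and>
        Re (\<Sum>i<n. \<Sum>j<n. cnj (c i) * c j * (complex_of_real s * psi (g i \<circ> inv (g j)))) \<ge> 0"
    unfolding eq using psdD[OF p gS, of c] s by simp
qed

context
  fixes chi :: "(point \<Rightarrow> point) \<Rightarrow> complex" and T :: "nat \<Rightarrow> point \<Rightarrow> point" and L :: nat
  assumes chi: "indecomposable_character chi"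
    and T1: "\<And>m. lvl (m + L) (T m)"
    and T2: "\<And>m. T m \<circ> T m = id"
    and T3: "\<And>n g m. lvl n g \<Longrightarrow> n \<le> m \<Longrightarrow> T m \<circ> g = g \<circ> T m"
    and T4: "\<And>n g m m'. lvl n g \<Longrightarrow> n \<le> m \<Longrightarrow> n \<le> m' \<Longrightarrow> chi (g \<circ> T m) = chi (g \<circ> T m')"
begin

lemma ch: "is_character chi" using chi by (simp add: indecomposable_character_def)

definition phi :: "(point \<Rightarrow> point) \<Rightarrow> complex" where
  "phi g = chi (g \<circ> T (SOME n. lvl n g))"

lemma phi_eq:
  assumes "lvl n g" "n \<le> m" shows "phi g = chi (g \<circ> T m)"
proof -
  have "\<exists>n. lvl n g" using assms(1) by blast
  then have l0: "lvl (SOME n. lvl n g) g" by (rule someI_ex)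
  have lm: "lvl (min (SOME n. lvl n g) n) g" using l0 assms(1) by (simp add: min_def)
  show ?thesis unfolding phi_def
    by (rule T4[OF lm]) (use assms(2) in auto)
qed

lemma T_S2inf: "T m \<in> S2inf" using lvlI[OF T1] .

lemma T_inv: "inv (T m) = T m" using inv_invol[OF T2] .

lemma T_comm_inv:
  assumes "lvl n g" "n \<le> m" shows "T m \<circ> inv g = inv g \<circ> T m"
  using T3[OF lvl_inv[OF assms(1)] assms(2)] .

definition cc :: complex where "cc = chi (T 0)"

lemma cc_real: "Im cc = 0" "\<bar>Re cc\<bar> \<le> 1"
  unfolding cc_def using chi_invol_real[OF ch T1 T2] by auto

lemma phi_id: "phi id = cc"
  using phi_eq[of 0 id 0] by (simp add: cc_def)

lemma psd_pm:
  fixes N :: nat and g :: "nat \<Rightarrow> point \<Rightarrow> point" and c :: "nat \<Rightarrow> complex" and e :: real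
  assumes gS: "\<forall>i<N. g i \<in> S2inf" and e: "e = 1 \<or> e = -1"
  shows "Im (\<Sum>i<N. \<Sum>j<N. cnj (c i) * c j * (chi (g i \<circ> inv (g j)) + e * phi (g i \<circ> inv (g j)))) = 0"
    "Re (\<Sum>i<N. \<Sum>j<N. cnj (c i) * c j * (chi (g i \<circ> inv (g j)) + e * phi (g i \<circ> inv (g j)))) \<ge> 0"
proof -
  obtain M where M: "\<forall>i<N. lvl M (g i)" using lvl_common[OF gS] by blast
  let ?T = "T M"
  define g' where "g' = (\<lambda>a. if a < N then g a else g (a - N) \<circ> ?T)"
  define d where "d = (\<lambda>a. if a < N then c a else complex_of_real e * c (a - N))"
  have g'S: "\<forall>a<N+N. g' a \<in> S2inf"
  proof (intro allI impI)
    fix a assume "a < N + N"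
    show "g' a \<in> S2inf"
    proof (cases "a < N")
      case True then show ?thesis using M lvlI by (auto simp: g'_def)
    next
      case False
      then have "a - N < N" using \<open>a < N + N\<close> by simp
      then have "lvl (M + L) (g (a - N))" using M lvl_mono by auto
      moreover have "lvl (M + L) ?T" by (rule T1)
      ultimately show ?thesis using False by (auto simp: g'_def intro: lvlI lvl_comp)
    qed
  qed
  have key: "cnj (d i) * d j * chi (g' i \<circ> inv (g' j)) + cnj (d i) * d (j + N) * chi (g' i \<circ> inv (g' (j + N)))
      + cnj (d (i + N)) * d j * chi (g' (i + N) \<circ> inv (g' j))
      + cnj (d (i + N)) * d (j + N) * chi (g' (i + N) \<circ> inv (g' (j + N)))
      = 2 * (cnj (c i) * c j * (chi (g i \<circ> inv (g j)) + e * phi (g i \<circ> inv (g j))))"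
    if ij: "i < N" "j < N" for i j
  proof -
    have li: "lvl M (g i)" and lj: "lvl M (g j)" using M ij by auto
    have bj: "bij (g j)" using lvl_bij[OF lj] .
    have bT: "bij ?T" using lvl_bij[OF T1] .
    let ?h = "g i \<circ> inv (g j)"
    have lh: "lvl M ?h" by (rule lvl_comp[OF li lvl_inv[OF lj]])
    have ph: "phi ?h = chi (?h \<circ> ?T)" by (rule phi_eq[OF lh order.refl])
    have cm: "?T \<circ> inv (g j) = inv (g j) \<circ> ?T" by (rule T_comm_inv[OF lj order.refl])
    have e1: "g i \<circ> inv (g j \<circ> ?T) = ?h \<circ> ?T"
      using o_inv_distrib[OF bj bT] T_inv cm by (simp add: comp_assoc)
    have e2: "(g i \<circ> ?T) \<circ> inv (g j) = ?h \<circ> ?T"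
      using cm by (simp add: comp_assoc)
    have e3: "(g i \<circ> ?T) \<circ> inv (g j \<circ> ?T) = ?h"
    proof -
      have "(g i \<circ> ?T) \<circ> inv (g j \<circ> ?T) = g i \<circ> (?T \<circ> ?T) \<circ> inv (g j)"
        using o_inv_distrib[OF bj bT] T_inv by (simp add: comp_assoc)
      then show ?thesis using T2 by simp
    qed
    have ee: "cnj (complex_of_real e) = complex_of_real e" "complex_of_real e * complex_of_real e = 1"
      using e by auto
    show ?thesis using ij
      apply (simp add: g'_def d_def e1 e2 e3 ph)
      using ee by (simp add: algebra_simps)
  qed
  have eq: "(\<Sum>a<N+N. \<Sum>b<N+N. cnj (d a) * d b * chi (g' a \<circ> inv (g' b))) =
     2 * (\<Sum>i<N. \<Sum>j<N. cnj (c i) * c j * (chi (g i \<circ> inv (g j)) + e * phi (g i \<circ> inv (g j))))"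
    unfolding sum_split22 sum_distrib_left using key by (simp add: add.assoc)
  show "Im (\<Sum>i<N. \<Sum>j<N. cnj (c i) * c j * (chi (g i \<circ> inv (g j)) + e * phi (g i \<circ> inv (g j)))) = 0"
    using chi_psd(1)[OF ch g'S, of d] unfolding eq by simp
  show "Re (\<Sum>i<N. \<Sum>j<N. cnj (c i) * c j * (chi (g i \<circ> inv (g j)) + e * phi (g i \<circ> inv (g j)))) \<ge> 0"
    using chi_psd(2)[OF ch g'S, of d] unfolding eq by simp
qed


lemma phi_comm:
  assumes g: "g \<in> S2inf" and h: "h \<in> S2inf"
  shows "phi (g \<circ> h) = phi (h \<circ> g)"
proof -
  obtain ng nh where "lvl ng g" "lvl nh h" using g h S2inf_iff by blast
  then have lg: "lvl (max ng nh) g" and lh: "lvl (max ng nh) h" by (auto intro: lvl_mono)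
  define M where "M = max ng nh"
  note lg = lg[folded M_def] and lh = lh[folded M_def]
  have "phi (g \<circ> h) = chi (g \<circ> h \<circ> T M)" by (rule phi_eq[OF lvl_comp[OF lg lh] order.refl])
  also have "\<dots> = chi (g \<circ> (h \<circ> T M))" by (simp add: comp_assoc)
  also have "\<dots> = chi ((h \<circ> T M) \<circ> g)"
    by (rule chi_comm[OF ch g]) (rule lvlI[OF lvl_comp[OF lvl_mono[OF lh, of "M + L"] T1]], simp)
  also have "\<dots> = chi (h \<circ> (T M \<circ> g))" by (simp add: comp_assoc)
  also have "\<dots> = chi (h \<circ> (g \<circ> T M))" using T3[OF lg order.refl] by simp
  also have "\<dots> = chi (h \<circ> g \<circ> T M)" by (simp add: comp_assoc)
  also have "\<dots> = phi (h \<circ> g)" by (rule phi_eq[OF lvl_comp[OF lh lg] order.refl, symmetric])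
  finally show ?thesis .
qed

lemma psd_e:
  assumes "e = 1 \<or> e = -1"
  shows "psd (\<lambda>x. chi x + complex_of_real e * phi x)"
  unfolding psd_def using psd_pm[OF _ assms] by blast

lemma comm_e:
  "\<forall>g\<in>S2inf. \<forall>h\<in>S2inf. (\<lambda>x. complex_of_real s * (chi x + complex_of_real e * phi x)) (g \<circ> h)
     = (\<lambda>x. complex_of_real s * (chi x + complex_of_real e * phi x)) (h \<circ> g)"
  using chi_comm[OF ch] phi_comm by simp

lemma cc_of_real: "cc = complex_of_real (Re cc)"
  using cc_real(1) by (simp add: complex_eq_iff)

lemma phi_mult_main:
  assumes g: "g \<in> S2inf" shows "phi g = cc * chi g"
proof -
  define r where "r = Re cc"
  have ccr: "cc = complex_of_real r" using cc_of_real by (simp add: r_def)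
  have rb: "-1 \<le> r" "r \<le> 1" using cc_real(2) by (auto simp: r_def)
  consider (one) "r = 1" | (mone) "r = -1" | (mid) "-1 < r" "r < 1" using rb by linarith
  then show ?thesis
  proof cases
    case one
    have p: "psd (\<lambda>x. chi x + complex_of_real (-1) * phi x)" by (rule psd_e) simp
    have "(\<lambda>x. chi x + complex_of_real (-1) * phi x) g = 0"
      by (rule psd_zero[OF p _ g]) (simp_all add: phi_id chi_id[OF ch] ccr one)
    then show ?thesis using ccr one by simp
  next
    case mone
    have p: "psd (\<lambda>x. chi x + complex_of_real 1 * phi x)" by (rule psd_e) simp
    have "(\<lambda>x. chi x + complex_of_real 1 * phi x) g = 0"
      by (rule psd_zero[OF p _ g]) (simp_all add: phi_id chi_id[OF ch] ccr mone)
    then show ?thesis using ccr mone by (simp add: add_eq_0_iff)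
  next
    case mid
    have nz: "1 + complex_of_real r \<noteq> 0" "1 - complex_of_real r \<noteq> 0"
      using mid by (simp_all add: complex_eq_iff)
    define chi1 where "chi1 = (\<lambda>x. complex_of_real (1 / (1 + r)) * (chi x + complex_of_real 1 * phi x))"
    define chi2 where "chi2 = (\<lambda>x. complex_of_real (1 / (1 - r)) * (chi x + complex_of_real (-1) * phi x))"
    have c1: "is_character chi1" unfolding chi1_def
    proof (rule char_of_psd[OF comm_e psd_scale[OF psd_e[of 1]]])
      show "complex_of_real (1 / (1 + r)) * (chi id + complex_of_real 1 * phi id) = 1"
        using mid nz by (simp add: phi_id chi_id[OF ch] ccr field_simps)
    qed (use mid in auto)
    have c2: "is_character chi2" unfolding chi2_def
    proof (rule char_of_psd[OF comm_e psd_scale[OF psd_e[of "-1"]]])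
      show "complex_of_real (1 / (1 - r)) * (chi id + complex_of_real (-1) * phi id) = 1"
        using mid nz by (simp add: phi_id chi_id[OF ch] ccr field_simps)
    qed (use mid in auto)
    define t where "t = (1 + r) / 2"
    have t: "0 < t" "t < 1" using mid by (auto simp: t_def)
    have dec: "\<forall>g\<in>S2inf. chi g = complex_of_real t * chi1 g + complex_of_real (1 - t) * chi2 g"
    proof
      fix g
      have r1: "t * (1 / (1 + r)) = 1/2" "(1 - t) * (1 / (1 - r)) = 1/2"
        using mid by (simp_all add: t_def field_simps)
      have a: "complex_of_real t * complex_of_real (1 / (1 + r)) = 1/2"
        "complex_of_real (1 - t) * complex_of_real (1 / (1 - r)) = 1/2"
        using arg_cong[OF r1(1), of complex_of_real] arg_cong[OF r1(2), of complex_of_real]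
        by (simp_all only: of_real_mult) simp_all
      have "complex_of_real t * chi1 g + complex_of_real (1 - t) * chi2 g =
         (complex_of_real t * complex_of_real (1 / (1 + r))) * (chi g + complex_of_real 1 * phi g) +
         (complex_of_real (1 - t) * complex_of_real (1 / (1 - r))) * (chi g + complex_of_real (-1) * phi g)"
        unfolding chi1_def chi2_def by (simp only: mult.assoc)
      also have "\<dots> = 1/2 * (chi g + complex_of_real 1 * phi g) + 1/2 * (chi g + complex_of_real (-1) * phi g)"
        by (simp only: a)
      also have "\<dots> = chi g" by (simp add: algebra_simps)
      finally show "chi g = complex_of_real t * chi1 g + complex_of_real (1 - t) * chi2 g" by simp
    qed
    have "\<not> (\<exists>g\<in>S2inf. chi1 g \<noteq> chi2 g)"
      using chi t c1 c2 dec unfolding indecomposable_character_def by blast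
    then have "chi1 g = chi2 g" using g by blast
    then have "(1 - r) * (chi g + phi g) = (1 + r) * (chi g - phi g)"
      using mid nz unfolding chi1_def chi2_def by (simp add: field_simps)
    then have "2 * phi g = 2 * r * chi g" by (simp add: algebra_simps)
    then show ?thesis using ccr by simp
  qed
qed

lemma mult_T:
  assumes "lvl n g" "n \<le> m" shows "chi (g \<circ> T m) = cc * chi g"
  using phi_eq[OF assms] phi_mult_main[OF lvlI[OF assms(1)]] by simp

end



definition TT :: "nat \<Rightarrow> bool list set \<Rightarrow> nat \<Rightarrow> point \<Rightarrow> point" where
  "TT l C' m = sA (blk m (m + l) C') (m + l)"

definition bsw :: "nat \<Rightarrow> nat \<Rightarrow> nat \<Rightarrow> nat \<Rightarrow> nat" where
  "bsw L m m' i = (if m \<le> i \<and> i < m + L then i - m + m' else if m' \<le> i \<and> i < m' + L then i - m' + m else i)"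

lemma bsw_invol: "m + L \<le> m' \<Longrightarrow> bsw L m m' \<circ> bsw L m m' = id"
  by (auto simp: bsw_def fun_eq_iff)

lemma bsw_hi: "m + L \<le> m' \<Longrightarrow> \<forall>i\<ge>m' + L. bsw L m m' i = i"
  by (auto simp: bsw_def)

lemma bsw_lo: "i < m \<Longrightarrow> m + L \<le> m' \<Longrightarrow> bsw L m m' i = i"
  by (auto simp: bsw_def)

lemma bsw_ge: "m \<le> i \<Longrightarrow> m + L \<le> m' \<Longrightarrow> m \<le> bsw L m m' i"
  by (auto simp: bsw_def)

lemma TT_lvl: "lvl (m + Suc l) (TT l C' m)"
  unfolding TT_def by (rule sA_lvl[OF blk_dep]) (auto intro: blk_indep)

lemma TT_invol: "TT l C' m \<circ> TT l C' m = id"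
  unfolding TT_def by (rule sA_invol) (auto intro: blk_indep)

lemma lvl_map_eq: "lvl n g \<Longrightarrow> n \<le> a \<Longrightarrow> map (g x) [a..<b] = map x [a..<b]"
  by (auto simp: lvl_high)

lemma TT_comm:
  assumes g: "lvl n g" and nm: "n \<le> m" shows "TT l C' m \<circ> g = g \<circ> TT l C' m"
proof
  fix x
  have e: "map (g x) [m..<m + l] = map x [m..<m + l]" by (rule lvl_map_eq[OF g nm])
  have mem: "g x \<in> blk m (m + l) C' \<longleftrightarrow> x \<in> blk m (m + l) C'"
    unfolding blk_def mem_Collect_eq e by simp
  show "(TT l C' m \<circ> g) x = (g \<circ> TT l C' m) x"
  proof (cases "x \<in> blk m (m + l) C'")
    case True then show ?thesis using mem by (simp add: TT_def sA_def)
  next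
    case False
    have "g (x(m + l := \<not> x (m + l))) = (g x)(m + l := \<not> x (m + l))"
      by (rule lvl_upd[OF g]) (use nm in simp)
    moreover have "g x (m + l) = x (m + l)" by (rule lvl_high[OF g]) (use nm in simp)
    ultimately show ?thesis using False mem by (simp add: TT_def sA_def)
  qed
qed

lemma cperm_comm:
  assumes g: "lvl n g" and nm: "n \<le> m" and mm: "m + L \<le> m'"
  shows "cperm (bsw L m m') \<circ> g = g \<circ> cperm (bsw L m m')"
proof
  fix x
  show "(cperm (bsw L m m') \<circ> g) x = (g \<circ> cperm (bsw L m m')) x"
  proof
    fix i
    show "(cperm (bsw L m m') \<circ> g) x i = (g \<circ> cperm (bsw L m m')) x i"
    proof (cases "i < n")
      case True
      have bi: "bsw L m m' i = i" using bsw_lo[of i m L m'] True nm mm by simp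
      have "g (x \<circ> bsw L m m') i = g x i"
      proof (rule lvl_dep[OF g _ True])
        show "\<forall>i<n. (x \<circ> bsw L m m') i = x i" using bsw_lo[of _ m L m'] nm mm by auto
      qed
      then show ?thesis using bi by (simp add: cperm_def)
    next
      case False
      have "n \<le> bsw L m m' i"
      proof (cases "i < m")
        case True then show ?thesis using bsw_lo[OF True mm] False by simp
      next
        case False then show ?thesis using bsw_ge[of m i L m'] mm nm by simp
      qed
      then show ?thesis using False lvl_high[OF g] by (simp add: cperm_def)
    qed
  qed
qed

lemma TT_conj:
  assumes mm: "m + Suc l \<le> m'"
  shows "cperm (bsw (Suc l) m m') \<circ> TT l C' m \<circ> cperm (bsw (Suc l) m m') = TT l C' m'"
proof
  fix x :: point
  let ?s = "bsw (Suc l) m m'"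
  let ?y = "x \<circ> ?s"
  have ys: "x (?s (m + t)) = x (m' + t)" if "t \<le> l" for t
    using that mm by (simp add: bsw_def add.commute)
  have my: "map ?y [m..<m + l] = map x [m'..<m' + l]"
    by (rule nth_equalityI) (auto simp: ys)
  have mem: "?y \<in> blk m (m + l) C' \<longleftrightarrow> x \<in> blk m' (m' + l) C'"
    unfolding blk_def mem_Collect_eq my ..
  have ss: "?s \<circ> ?s = id" by (rule bsw_invol[OF mm])
  have yy: "?y \<circ> ?s = x"
  proof -
    have "?y \<circ> ?s = x \<circ> (?s \<circ> ?s)" by (simp add: comp_assoc)
    then show ?thesis using ss by simp
  qed
  show "(cperm ?s \<circ> TT l C' m \<circ> cperm ?s) x = TT l C' m' x"
  proof (cases "x \<in> blk m' (m' + l) C'")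
    case True
    then show ?thesis using mem yy by (simp add: TT_def sA_def cperm_def)
  next
    case False
    have "(?y(m + l := \<not> ?y (m + l))) \<circ> ?s = x(m' + l := \<not> x (m' + l))"
    proof
      fix i
      have s1: "?s i = m + l \<longleftrightarrow> i = m' + l" using mm by (auto simp: bsw_def)
      have s2: "x (?s (?s i)) = x i" using fun_cong[OF ss, of i] by simp
      show "((?y(m + l := \<not> ?y (m + l))) \<circ> ?s) i = (x(m' + l := \<not> x (m' + l))) i"
        using s1 s2 ys[of l] by auto
    qed
    then show ?thesis using False mem by (simp add: TT_def sA_def cperm_def)
  qed
qed

lemma TT_T4_step:
  assumes chi: "is_character chi" and g: "lvl n g" and nm: "n \<le> m" and mm: "m + Suc l \<le> m'"
  shows "chi (g \<circ> TT l C' m) = chi (g \<circ> TT l C' m')"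
proof -
  let ?P = "cperm (bsw (Suc l) m m')"
  let ?N = "m' + Suc l"
  have lP: "lvl ?N ?P" by (rule cperm_lvl[OF bsw_invol[OF mm] bsw_hi[OF mm]])
  have PP: "?P \<circ> ?P = id" by (rule cperm_invol[OF bsw_invol[OF mm]])
  have lg: "lvl ?N (g \<circ> TT l C' m)"
    by (rule lvl_comp[OF lvl_mono[OF g] lvl_mono[OF TT_lvl]]) (use nm mm in simp_all)
  have "?P \<circ> (g \<circ> TT l C' m) \<circ> ?P = (?P \<circ> g) \<circ> (TT l C' m \<circ> ?P)" by (simp add: comp_assoc)
  also have "\<dots> = g \<circ> (?P \<circ> TT l C' m \<circ> ?P)"
    using cperm_comm[OF g nm mm] by (simp add: comp_assoc)
  also have "\<dots> = g \<circ> TT l C' m'" using TT_conj[OF mm] by simp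
  finally have e: "?P \<circ> (g \<circ> TT l C' m) \<circ> ?P = g \<circ> TT l C' m'" .
  have "chi (?P \<circ> (g \<circ> TT l C' m) \<circ> ?P) = chi (g \<circ> TT l C' m)"
    by (rule chi_conj[OF chi lP lP lg PP PP])
  with e show ?thesis by simp
qed

lemma TT_T4:
  assumes chi: "is_character chi" and g: "lvl n g" and "n \<le> m" "n \<le> m'"
  shows "chi (g \<circ> TT l C' m) = chi (g \<circ> TT l C' m')"
proof -
  have "chi (g \<circ> TT l C' m) = chi (g \<circ> TT l C' (m + m' + Suc l))"
    by (rule TT_T4_step[OF chi g]) (use assms in simp_all)
  also have "\<dots> = chi (g \<circ> TT l C' m')"
    by (rule TT_T4_step[OF chi g, symmetric]) (use assms in simp_all)
  finally show ?thesis .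
qed

lemma TT_mult:
  assumes chi: "indecomposable_character chi" and g: "lvl n g" and nm: "n \<le> m"
  shows "chi (g \<circ> TT l C' m) = chi (TT l C' 0) * chi g"
proof -
  have ch: "is_character chi" using chi by (simp add: indecomposable_character_def)
  have "chi (g \<circ> TT l C' m) = cc chi (TT l C') * chi g"
    apply (rule mult_T[where T="TT l C'" and L="Suc l" and n=n])
    apply (rule chi)
    apply (rule TT_lvl)
    apply (rule TT_invol)
    apply (erule TT_comm, assumption)
    apply (rule TT_T4[OF ch], assumption+)
    apply (rule g)
    apply (rule nm)
    done
  moreover have "cc chi (TT l C') = chi (TT l C' 0)"
    apply (rule cc_def[where L="Suc l"])
    apply (rule chi)
    apply (rule TT_lvl)
    apply (rule TT_invol)
    apply (erule TT_comm, assumption)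
    apply (rule TT_T4[OF ch], assumption+)
    done
  ultimately show ?thesis by simp
qed



lemma dep_Int: assumes "dep N A" "dep N B" shows "dep N (A \<inter> B)"
  unfolding dep_def
proof (intro allI impI)
  fix x y :: point assume h: "\<forall>i<N. x i = y i"
  show "x \<in> A \<inter> B \<longleftrightarrow> y \<in> A \<inter> B" using depD[OF assms(1) h] depD[OF assms(2) h] by simp
qed

lemma indep_Int: assumes "indep J A" "indep J B" shows "indep J (A \<inter> B)"
  unfolding indep_def
proof (intro allI impI)
  fix x y :: point assume h: "\<forall>i. i \<notin> J \<longrightarrow> x i = y i"
  show "x \<in> A \<inter> B \<longleftrightarrow> y \<in> A \<inter> B" using indepD[OF assms(1) h] indepD[OF assms(2) h] by simp
qed

lemma cyl_Int: "cyl K C1 \<inter> cyl K C2 = cyl K (C1 \<inter> C2)"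
  by (auto simp: cyl_def)

lemma Xn_1: "card (Xn 1) = 2" using card_Xn[of 1] by simp

lemma G_mult:
  assumes chi: "indecomposable_character chi" and a: "a \<le> 2 ^ k" and b: "b \<le> 2 ^ l"
  shows "G chi (k + l) (a * b) = G chi k a * G chi l b"
proof -
  have ch: "is_character chi" using chi by (simp add: indecomposable_character_def)
  obtain Cb where Cb: "Cb \<subseteq> Xn k" "card Cb = a" using exists_card_subset[OF a] by blast
  obtain C' where C': "C' \<subseteq> Xn l" "card C' = b" using exists_card_subset[OF b] by blast
  define B where "B = cyl k Cb"
  define D where "D = blk (Suc k) (Suc k + l) C'"
  define N where "N = Suc (Suc k + l)"
  have lg: "lvl (Suc k) (sA B k)" unfolding B_def by (rule sA_cyl_lvl) simp_all
  have m1: "chi (sA B k \<circ> TT l C' (Suc k)) = chi (TT l C' 0) * chi (sA B k)"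
    by (rule TT_mult[OF chi lg order.refl])
  have TT0: "TT l C' 0 = sA (cyl l C') l" by (simp add: TT_def cyl_blk)
  have TTs: "TT l C' (Suc k) = sA D (Suc k + l)" by (simp add: TT_def D_def)
  have dB: "dep N B" unfolding B_def N_def by (rule cyl_dep) simp
  have dD: "dep N D" unfolding D_def N_def by (rule blk_dep) simp
  have iB: "indep {k, Suc k + l} B" unfolding B_def by (rule cyl_indep) simp
  have iD: "indep {k, Suc k + l} D" unfolding D_def by (rule blk_indep) simp
  have two: "chi (sA B k \<circ> sA D (Suc k + l)) = chi (sA (B \<inter> D) k)"
    by (rule chi_two_flip[OF ch _ dB dD _ _ iB iD]) (simp_all add: N_def)
  have sw: "chi (sA (B \<inter> D) k) = chi (sA (B \<inter> D) (Suc k + l))"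
    by (rule chi_sA_swap[OF ch dep_Int[OF dB dD] _ _ indep_Int[OF iB iD]]) (simp_all add: N_def)
  define P where "P = {us. length us = k + 1 \<and> take k us \<in> Cb \<and> drop k us \<in> Xn 1}"
  define E where "E = {xs. length xs = (k + 1) + l \<and> take (k + 1) xs \<in> P \<and> drop (k + 1) xs \<in> C'}"
  have PX: "P \<subseteq> Xn (k + 1)" by (auto simp: P_def Xn_def)
  have EX: "E \<subseteq> Xn (Suc k + l)" by (auto simp: E_def Xn_def)
  have cP: "card P = a * 2" unfolding P_def using card_app[OF Cb(1) order.refl, of 1] Cb(2) Xn_1 by simp
  have cE: "card E = a * 2 * b" unfolding E_def using card_app[OF PX C'(1)] cP C'(2) by simp
  have BD: "B \<inter> D = cyl (Suc k + l) E"
  proof (rule set_eqI)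
    fix x :: point
    have t1: "take (k + 1) (map x [0..<Suc k + l]) = map x [0..<Suc k]"
      unfolding take_map by (subst take_upt) simp_all
    have t2: "drop (k + 1) (map x [0..<Suc k + l]) = map x [Suc k..<Suc k + l]"
      by (simp add: drop_map)
    have t3: "take k (map x [0..<Suc k]) = map x [0..<k]"
      unfolding take_map by (subst take_upt) simp_all
    have t4: "drop k (map x [0..<Suc k]) \<in> Xn 1" by (simp add: Xn_def)
    show "x \<in> B \<inter> D \<longleftrightarrow> x \<in> cyl (Suc k + l) E"
      unfolding B_def D_def cyl_def blk_def E_def P_def mem_Collect_eq Int_iff
      using t1 t2 t3 t4 by simp
  qed
  have "complex_of_real (G chi (k + l) (a * b)) = complex_of_real (G chi (k + l + 1) (a * b * 2 ^ 1))"
    using G_lift[OF ch, of "a * b" "k + l" 1] a b by (simp add: mult_le_mono power_add)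
  also have "\<dots> = chi (sA (cyl (Suc k + l) E) (Suc k + l))"
  proof -
    have "a * b * 2 ^ 1 = card E" using cE by simp
    moreover have "k + l + 1 = Suc k + l" by simp
    ultimately show ?thesis using Gval[OF ch EX order.refl] by simp
  qed
  also have "\<dots> = chi (TT l C' 0) * chi (sA B k)"
    using m1 TTs two sw BD by simp
  also have "\<dots> = complex_of_real (G chi l b) * complex_of_real (G chi k a)"
    using Gval[OF ch C'(1) order.refl] Gval[OF ch Cb(1) order.refl] C'(2) Cb(2) TT0 B_def by simp
  finally show ?thesis by (simp only: of_real_mult[symmetric] of_real_eq_iff mult.commute)
qed



lemma pair_val:
  assumes ch: "is_character chi" and C1: "C1 \<subseteq> Xn K" and C2: "C2 \<subseteq> Xn K"
    and i: "K \<le> i" and j: "K \<le> j" and ij: "i \<noteq> j"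
  shows "chi (sA (cyl K C1) i \<circ> inv (sA (cyl K C2) j)) = complex_of_real (G chi K (card (C1 \<inter> C2)))"
proof -
  have iv: "inv (sA (cyl K C2) j) = sA (cyl K C2) j" by (rule inv_invol[OF sA_cyl_invol[OF j]])
  have "chi (sA (cyl K C1) i \<circ> sA (cyl K C2) j) = chi (sA (cyl K C1 \<inter> cyl K C2) i)"
    by (rule chi_two_flip[OF ch ij cyl_dep cyl_dep _ _ cyl_indep cyl_indep, of _ "Suc (max i j)"])
      (use i j in auto)
  also have "\<dots> = complex_of_real (G chi K (card (C1 \<inter> C2)))"
    unfolding cyl_Int by (rule Gval[OF ch _ i]) (use C1 in auto)
  finally show ?thesis using iv by simp
qed

lemma self_val:
  assumes ch: "is_character chi" and i: "K \<le> i"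
  shows "chi (sA (cyl K C) i \<circ> inv (sA (cyl K C) i)) = 1"
  using inv_invol[OF sA_cyl_invol[OF i]] sA_cyl_invol[OF i] chi_id[OF ch] by simp

lemma diag_sum:
  fixes x y :: complex
  shows "(\<Sum>i<R. \<Sum>j<R. (if i = j then x else y)) = of_nat R * x + of_nat R * (of_nat R - 1) * y"
proof -
  have inner: "(\<Sum>j<R. (if i = j then x else y)) = of_nat R * y + (x - y)" if "i < R" for i
  proof -
    have "(\<Sum>j<R. (if i = j then x else y)) = (\<Sum>j<R. y + (if i = j then x - y else 0))"
      by (rule sum.cong) auto
    also have "\<dots> = of_nat R * y + (x - y)" using that by (simp add: sum.distrib)
    finally show ?thesis .
  qed
  have "(\<Sum>i<R. \<Sum>j<R. (if i = j then x else y)) = (\<Sum>i<R. of_nat R * y + (x - y))"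
    by (rule sum.cong) (auto simp: inner)
  also have "\<dots> = of_nat R * x + of_nat R * (of_nat R - 1) * y" by (simp add: algebra_simps)
  finally show ?thesis .
qed

lemma G_mono:
  assumes ch: "is_character chi" and ab: "a \<le> b" and b: "b \<le> 2 ^ K"
  shows "G chi K a \<le> G chi K b"
proof -
  obtain Cb where Cb: "Cb \<subseteq> Xn K" "card Cb = b" using exists_card_subset[OF b] by blast
  have "a \<le> card Cb" using ab Cb by simp
  then obtain Ca where Ca: "Ca \<subseteq> Cb" "card Ca = a" "finite Ca" by (rule obtain_subset_with_card_n)
  have CaX: "Ca \<subseteq> Xn K" using Ca Cb by auto
  let ?gA = "G chi K a" and ?gB = "G chi K b"
  have key: "0 \<le> 2 - 2 * ?gA + real n * (?gB - ?gA)" for n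
  proof -
    define R where "R = Suc n"
    define C where "C = (\<lambda>i. if i < R then Cb else Ca)"
    define h where "h = (\<lambda>i. sA (cyl K (C i)) (K + i))"
    define d where "d = (\<lambda>i. if i < R then (1::complex) else -1)"
    have CX: "C i \<subseteq> Xn K" for i using Cb CaX by (simp add: C_def)
    have hS: "\<forall>i<R+R. h i \<in> S2inf"
      unfolding h_def by (intro allI impI lvlI[OF sA_cyl_lvl[of K _ "Suc (K + R + R)"]]) auto
    have cI: "card (C i \<inter> C j) = (if i < R \<and> j < R then b else a)" for i j
    proof -
      have "Ca \<inter> Cb = Ca" "Cb \<inter> Ca = Ca" using Ca by auto
      then show ?thesis using Ca Cb by (auto simp: C_def)
    qed
    have v: "chi (h i \<circ> inv (h j)) = (if i = j then 1 else
        complex_of_real (if i < R \<and> j < R then ?gB else ?gA))" for i j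
    proof (cases "i = j")
      case True then show ?thesis unfolding h_def using self_val[OF ch, of K "K + i"] by simp
    next
      case False
      have "chi (h i \<circ> inv (h j)) = complex_of_real (G chi K (card (C i \<inter> C j)))"
        unfolding h_def by (rule pair_val[OF ch CX CX]) (use False in auto)
      then show ?thesis using False cI[of i j] by simp
    qed
    have blk: "cnj (d i) * d j * chi (h i \<circ> inv (h j)) + cnj (d i) * d (j + R) * chi (h i \<circ> inv (h (j + R)))
        + cnj (d (i + R)) * d j * chi (h (i + R) \<circ> inv (h j))
        + cnj (d (i + R)) * d (j + R) * chi (h (i + R) \<circ> inv (h (j + R)))
        = (if i = j then 2 - 2 * complex_of_real ?gA else complex_of_real ?gB - complex_of_real ?gA)"
      if "i < R" "j < R" for i j
      using that by (simp add: v d_def)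
    have S: "(\<Sum>i<R+R. \<Sum>j<R+R. cnj (d i) * d j * chi (h i \<circ> inv (h j))) =
      of_nat R * (2 - 2 * complex_of_real ?gA) + of_nat R * (of_nat R - 1) * (complex_of_real ?gB - complex_of_real ?gA)"
      unfolding sum_split22 diag_sum[symmetric]
      by (intro sum.cong refl) (simp add: blk)
    have "0 \<le> Re (of_nat R * (2 - 2 * complex_of_real ?gA) + of_nat R * (of_nat R - 1) * (complex_of_real ?gB - complex_of_real ?gA))"
      using chi_psd(2)[OF ch hS, of d] unfolding S .
    then have "0 \<le> real R * (2 - 2 * ?gA) + real R * (real R - 1) * (?gB - ?gA)" by simp
    then have "0 \<le> real R * ((2 - 2 * ?gA) + real n * (?gB - ?gA))"
      by (simp add: R_def algebra_simps)
    then show ?thesis using R_def by (simp add: zero_le_mult_iff)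
  qed
  show ?thesis
  proof (rule ccontr)
    assume "\<not> ?gA \<le> ?gB"
    then have pos: "0 < ?gA - ?gB" by simp
    obtain n where n: "(2 - 2 * ?gA) / (?gA - ?gB) < real n" using reals_Archimedean2 by blast
    then have "2 - 2 * ?gA < real n * (?gA - ?gB)" using pos by (simp add: field_simps)
    with key[of n] show False by (simp add: algebra_simps)
  qed
qed

lemma three_sum_expand:
  fixes f :: "nat \<Rightarrow> nat \<Rightarrow> complex"
  shows "(\<Sum>i<3. \<Sum>j<3. f i j) = f 0 0 + f 0 1 + f 0 2 + f 1 0 + f 1 1 + f 1 2 + f 2 0 + f 2 1 + f 2 2"
  by (simp add: numeral_3_eq_3 numeral_2_eq_2)

lemma G3:
  assumes ch: "is_character chi"
  shows "0 \<le> 3 - 4 * G chi 1 1 + 2 * G chi 1 0"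
proof -
  define a where "a = sA (cyl 1 {[True]}) 1"
  define b where "b = sA (cyl 1 {[False]}) 1"
  define z where "z = sA (cyl 1 {}) 1"
  have ab: "a \<circ> b = z" "b \<circ> a = z"
    unfolding a_def b_def z_def by (auto simp: sA_def cyl_def fun_eq_iff)
  have ia: "inv a = a" unfolding a_def by (rule inv_invol[OF sA_cyl_invol]) simp
  have ib: "inv b = b" unfolding b_def by (rule inv_invol[OF sA_cyl_invol]) simp
  have aa: "a \<circ> a = id" "b \<circ> b = id" unfolding a_def b_def by (rule sA_cyl_invol, simp)+
  have va: "chi a = complex_of_real (G chi 1 1)"
    unfolding a_def using Gval[OF ch _ order.refl, of "{[True]}" 1] by (simp add: Xn_def)
  have vb: "chi b = complex_of_real (G chi 1 1)"
    unfolding b_def using Gval[OF ch _ order.refl, of "{[False]}" 1] by (simp add: Xn_def)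
  have vz: "chi z = complex_of_real (G chi 1 0)"
    unfolding z_def using Gval[OF ch _ order.refl, of "{}" 1] by simp
  have la: "lvl 2 a" "lvl 2 b" unfolding a_def b_def by (rule sA_cyl_lvl, simp, simp)+
  define h where "h = (\<lambda>i::nat. if i = 0 then id else if i = 1 then a else b)"
  define d where "d = (\<lambda>i::nat. if i = 0 then (1::complex) else -1)"
  have hS: "\<forall>i<3. h i \<in> S2inf"
    unfolding h_def using lvlI[OF la(1)] lvlI[OF la(2)] lvlI[OF lvl_id] by auto
  have "(\<Sum>i<3. \<Sum>j<3. cnj (d i) * d j * chi (h i \<circ> inv (h j))) =
      3 - 4 * complex_of_real (G chi 1 1) + 2 * complex_of_real (G chi 1 0)"
    unfolding three_sum_expand using chi_id[OF ch]
    by (simp add: h_def d_def ia ib aa ab va vb vz)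
  then show ?thesis using chi_psd(2)[OF ch hS, of d] by simp
qed



context
  fixes chi :: "(point \<Rightarrow> point) \<Rightarrow> complex"
  assumes chi: "indecomposable_character chi"
begin

lemma ch9: "is_character chi" using chi by (simp add: indecomposable_character_def)

lemma Gz: "G chi K 0 = G chi 0 0"
  using G_lift[OF ch9, of 0 0 K] by simp

lemma zz: "G chi 0 0 * G chi 0 0 = G chi 0 0"
  using G_mult[OF chi, of 0 0 0 0] by simp

lemma z01: "G chi 0 0 = 0 \<or> G chi 0 0 = 1"
proof -
  have "G chi 0 0 * (G chi 0 0 - 1) = 0" using zz by (simp add: algebra_simps)
  then show ?thesis by simp
qed

lemma Gnn: assumes "a \<le> 2 ^ K" shows "0 \<le> G chi K a"
proof -
  have "G chi K 0 \<le> G chi K a" by (rule G_mono[OF ch9 _ assms]) simp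
  then show ?thesis using Gz z01 by auto
qed

lemma Gle1: assumes "a \<le> 2 ^ K" shows "G chi K a \<le> 1"
  using G_bound[OF ch9 assms] by simp

lemma Gpow1: "G chi j 1 = (G chi 1 1) ^ j"
proof (induction j)
  case 0 then show ?case using G_full[OF ch9, of 0] by simp
next
  case (Suc j)
  have "G chi (1 + j) (1 * 1) = G chi 1 1 * G chi j 1"
    by (rule G_mult[OF chi]) simp_all
  then show ?case using Suc by simp
qed

lemma G2e: assumes "e \<le> M" shows "G chi M (2 ^ e) = (G chi 1 1) ^ (M - e)"
proof -
  have "G chi ((M - e) + e) (1 * 2 ^ e) = G chi (M - e) 1" by (rule G_lift[OF ch9]) simp
  then show ?thesis using assms Gpow1[of "M - e"] by simp
qed

lemma Gpow: assumes a: "a \<le> 2 ^ K" shows "G chi (n * K) (a ^ n) = (G chi K a) ^ n"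
proof (induction n)
  case 0 then show ?case using G_full[OF ch9, of 0] by simp
next
  case (Suc n)
  have an: "a ^ n \<le> 2 ^ (n * K)"
    using power_mono[OF a, of n] by (simp add: power_mult mult.commute)
  have "G chi (K + n * K) (a * a ^ n) = G chi K a * G chi (n * K) (a ^ n)"
    by (rule G_mult[OF chi a an])
  then show ?case using Suc by simp
qed

lemma c_nn: "0 \<le> G chi 1 1" using Gnn[of 1 1] by simp
lemma c_le1: "G chi 1 1 \<le> 1" using Gle1[of 1 1] by simp

lemma sandwich_bounds:
  assumes c0: "0 < G chi 1 1" and c1: "G chi 1 1 < 1"
    and a1: "1 \<le> a" and aK: "a \<le> 2 ^ K"
  defines "c \<equiv> G chi 1 1"
  defines "\<beta> \<equiv> - log 2 c"
  defines "q \<equiv> real a / 2 ^ K"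
  shows "c * (q powr \<beta>) ^ n \<le> (G chi K a) ^ n \<and> (G chi K a) ^ n \<le> (q powr \<beta>) ^ n / c"
proof -
  have cpos: "0 < c" and clt: "c < 1" using c0 c1 by (simp_all add: c_def)
  have q0: "0 < q" using a1 by (simp add: q_def)
  have c_eq: "2 powr (- \<beta>) = c" using cpos by (simp add: \<beta>_def)
  have cpow: "c ^ j = 2 powr (- (\<beta> * real j))" for j
    using powr_power[of "2::real" "- \<beta>" j] c_eq by (simp add: mult.commute)
  have twob: "2 powr \<beta> = 1 / c"
  proof -
    have "2 powr \<beta> * 2 powr (- \<beta>) = 1" by (simp add: powr_add[symmetric])
    then show ?thesis using c_eq cpos by (simp add: field_simps)
  qed
  define M where "M = n * K"
  define N where "N = a ^ n"
  have N1: "1 \<le> N" using a1 by (simp add: N_def)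
  have NM: "N \<le> 2 ^ M"
    using power_mono[OF aK, of n] by (simp add: N_def M_def power_mult mult.commute)
  define e where "e = (LEAST e. N \<le> 2 ^ e)"
  have Ne: "N \<le> 2 ^ e" unfolding e_def by (rule LeastI[of _ M]) (rule NM)
  have eM: "e \<le> M" unfolding e_def by (rule Least_le) (rule NM)
  have eN: "2 ^ e \<le> 2 * N"
  proof (cases "e = 0")
    case True then show ?thesis using N1 by simp
  next
    case False
    then have "\<not> N \<le> 2 ^ (e - 1)" unfolding e_def by (intro not_less_Least) (simp add: e_def[symmetric])
    then have "2 ^ (e - 1) < N" by simp
    moreover have "(2::nat) ^ e = 2 * 2 ^ (e - 1)" using False by (simp add: power_eq_if)
    ultimately show ?thesis by simp
  qed
  have gn: "(G chi K a) ^ n = G chi M N" using Gpow[OF aK, of n] by (simp add: M_def N_def)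
  have up: "G chi M N \<le> c ^ (M - e)"
  proof -
    have "G chi M N \<le> G chi M (2 ^ e)" by (rule G_mono[OF ch9 Ne]) (use eM in simp)
    then show ?thesis using G2e[OF eM] by (simp add: c_def)
  qed
  have lo: "c ^ (M - e + 1) \<le> G chi M N"
  proof (cases "e = 0")
    case True
    then have "N = 1" using Ne N1 by simp
    then have "G chi M N = c ^ M" using Gpow1[of M] by (simp add: c_def)
    moreover have "c ^ (M + 1) \<le> c ^ M" using cpos clt by (simp add: power_decreasing)
    ultimately show ?thesis using True by simp
  next
    case False
    have le: "2 ^ (e - 1) \<le> N"
    proof -
      have "\<not> N \<le> 2 ^ (e - 1)" unfolding e_def using False by (intro not_less_Least) (simp add: e_def[symmetric])
      then show ?thesis by simp
    qed
    have h1: "G chi M (2 ^ (e - 1)) \<le> G chi M N" by (rule G_mono[OF ch9 le NM])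
    have h2: "G chi M (2 ^ (e - 1)) = c ^ (M - (e - 1))" using G2e[of "e - 1" M] eM by (simp add: c_def)
    have h3: "M - (e - 1) = M - e + 1" using False eM by simp
    from h2 h3 have "G chi M (2 ^ (e - 1)) = c ^ (M - e + 1)" by (simp only:)
    with h1 show ?thesis by (simp only:)
  qed
  define t where "t = (2::real) ^ e / 2 ^ M"
  have qn: "q ^ n = real N / 2 ^ M"
    by (simp add: q_def N_def M_def power_divide power_mult mult.commute)
  have Ner: "real N \<le> 2 ^ e"
  proof -
    have "real N \<le> real ((2::nat) ^ e)" using Ne by (simp only: of_nat_le_iff)
    then show ?thesis by simp
  qed
  have eNr: "2 ^ e \<le> 2 * real N"
  proof -
    have "real ((2::nat) ^ e) \<le> real (2 * N)" using eN by (simp only: of_nat_le_iff)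
    then show ?thesis by simp
  qed
  have t1: "q ^ n \<le> t" unfolding qn t_def using Ner by (simp add: divide_right_mono)
  have t2: "t \<le> 2 * q ^ n" unfolding qn t_def using eNr by (simp add: divide_right_mono)
  have Qn: "(q powr \<beta>) ^ n = (q ^ n) powr \<beta>"
  proof -
    have "(q powr \<beta>) ^ n = q powr (real n * \<beta>)" using powr_power[of q \<beta> n] q0 by simp
    also have "\<dots> = (q powr real n) powr \<beta>" by (simp add: powr_powr)
    also have "\<dots> = (q ^ n) powr \<beta>" using powr_realpow[OF q0] by simp
    finally show ?thesis .
  qed
  have ct: "c ^ (M - e) = t powr \<beta>"
  proof -
    have "t = 2 powr (real e - real M)"
      by (simp add: t_def powr_diff powr_realpow)
    then have "t powr \<beta> = 2 powr ((real e - real M) * \<beta>)" by (simp add: powr_powr)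
    also have "\<dots> = c ^ (M - e)" using cpow[of "M - e"] eM by (simp add: of_nat_diff algebra_simps)
    finally show ?thesis by simp
  qed
  have b0: "0 \<le> \<beta>"
  proof -
    have "log 2 c < 0" using cpos clt by simp
    then show ?thesis by (simp add: \<beta>_def)
  qed
  have qn0: "0 \<le> q ^ n" using q0 by simp
  have A: "(q ^ n) powr \<beta> \<le> t powr \<beta>" by (rule powr_mono2[OF b0 qn0 t1])
  have B: "t powr \<beta> \<le> (2 * q ^ n) powr \<beta>" by (rule powr_mono2[OF b0 _ t2]) (simp add: t_def)
  have B2: "(2 * q ^ n) powr \<beta> = (q ^ n) powr \<beta> / c"
    using twob by (simp add: powr_mult)
  have "(G chi K a) ^ n \<le> (q powr \<beta>) ^ n / c"
    using gn up ct B B2 Qn by simp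
  moreover have "c * (q powr \<beta>) ^ n \<le> (G chi K a) ^ n"
  proof -
    have e1: "c ^ (M - e + 1) = c * t powr \<beta>" using ct by (simp only: power_Suc Suc_eq_plus1[symmetric])
    have e2: "c * (q powr \<beta>) ^ n \<le> c * t powr \<beta>" using A Qn cpos by simp
    have "c * (q powr \<beta>) ^ n \<le> G chi M N" using e2 lo unfolding e1 by (rule order_trans)
    then show ?thesis using gn by simp
  qed
  ultimately show ?thesis by simp
qed

end



context
  fixes chi :: "(point \<Rightarrow> point) \<Rightarrow> complex"
  assumes chi: "indecomposable_character chi"
begin

lemma epow_top: "epow x \<top> = (if x = 1 then 1 else 0)" by (simp add: epow_def)
lemma epow_zero: "epow x 0 = 1" by (simp add: epow_def)
lemma epow_pos: "0 < b \<Longrightarrow> epow x (ennreal b) = x powr b" by (simp add: epow_def)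

lemma G_form: "\<exists>\<alpha>. \<forall>K a. a \<le> 2 ^ K \<longrightarrow> G chi K a = epow (real a / 2 ^ K) \<alpha>"
proof -
  have ch: "is_character chi" by (rule ch9[OF chi])
  define c where "c = G chi 1 1"
  have c0: "0 \<le> c" and c1: "c \<le> 1" using c_nn[OF chi] c_le1[OF chi] by (simp_all add: c_def)
  have z10: "G chi 1 0 = G chi 0 0" by (rule Gz[OF chi])
  have zc: "G chi 0 0 \<le> c"
    using G_mono[OF ch, of 0 1 1] z10 by (simp add: c_def)
  consider (one) "c = 1" | (zero) "c = 0" | (mid) "0 < c" "c < 1" using c0 c1 by linarith
  then show ?thesis
  proof cases
    case one
    have "0 \<le> 3 - 4 * G chi 1 1 + 2 * G chi 1 0" by (rule G3[OF ch])
    then have "G chi 0 0 = 1" using one z10 z01[OF chi] by (auto simp: c_def)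
    have "G chi K a = epow (real a / 2 ^ K) 0" if a: "a \<le> 2 ^ K" for K a
    proof -
      have "G chi K 0 \<le> G chi K a" by (rule G_mono[OF ch _ a]) simp
      then have "1 \<le> G chi K a" using Gz[OF chi, of K] \<open>G chi 0 0 = 1\<close> by simp
      then show ?thesis using Gle1[OF chi a] by (simp add: epow_zero)
    qed
    then show ?thesis by blast
  next
    case zero
    have z0: "G chi 0 0 = 0" using zc zero Gnn[OF chi, of 0 0] by simp
    have "G chi K a = epow (real a / 2 ^ K) \<top>" if a: "a \<le> 2 ^ K" for K a
    proof (cases "a = 2 ^ K")
      case True then show ?thesis using G_full[OF ch, of K] by (simp add: epow_top)
    next
      case False
      then have aK: "a < 2 ^ K" using a by simp
      have q1: "real a / 2 ^ K \<noteq> 1"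
      proof
        assume "real a / 2 ^ K = 1"
        then have "real a = 2 ^ K" by (simp add: field_simps)
        then have "a = 2 ^ K" by (metis of_nat_eq_of_nat_power_cancel_iff of_nat_numeral)
        then show False using False by simp
      qed
      show ?thesis
      proof (cases "a = 0")
        case True then show ?thesis using Gz[OF chi, of K] z0 by (simp add: epow_top)
      next
        case a0: False
        define q where "q = real a / 2 ^ K"
        have qlt: "q < 1" using aK unfolding q_def
          by (simp add: field_simps)
        obtain n where n: "q ^ n < 1 / 2" using real_arch_pow_inv[of "1/2" q] qlt by auto
        have qn: "q ^ n = real (a ^ n) / 2 ^ (n * K)"
          by (simp add: q_def power_divide power_mult mult.commute)
        have "real (2 * a ^ n) < 2 ^ (n * K)" using n unfolding qn by (simp add: field_simps)
        then have lt: "2 * a ^ n < 2 ^ (n * K)"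
          by (metis of_nat_less_iff of_nat_numeral of_nat_power)
        have nK: "1 \<le> n * K"
        proof (rule ccontr)
          assume "\<not> 1 \<le> n * K"
          then have "n * K = 0" by linarith
          then have p1: "(2::nat) ^ (n * K) = 1" by simp
          have "1 \<le> a ^ n" using a0 by simp
          then show False using lt p1 by linarith
        qed
        have pw: "(2::nat) ^ (n * K) = 2 * 2 ^ (n * K - 1)"
          using nK by (simp add: power_eq_if)
        have an: "a ^ n \<le> 2 ^ (n * K - 1)" using lt pw by simp
        have "G chi (n * K) (a ^ n) \<le> G chi (n * K) (2 ^ (n * K - 1))"
          by (rule G_mono[OF ch an]) simp
        also have "\<dots> = c ^ (n * K - (n * K - 1))" using G2e[OF chi, of "n * K - 1" "n * K"] by (simp add: c_def)
        also have "\<dots> = 0" using nK zero by simp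
        finally have "(G chi K a) ^ n \<le> 0" using Gpow[OF chi a, of n] by simp
        moreover have "0 \<le> G chi K a" by (rule Gnn[OF chi a])
        moreover have "n \<noteq> 0"
        proof
          assume "n = 0" then show False using n by simp
        qed
        ultimately have "G chi K a = 0"
          by (metis le_less not_less zero_less_power)
        then show ?thesis using q1 by (simp add: epow_top)
      qed
    qed
    then show ?thesis by blast
  next
    case mid
    define \<beta> where "\<beta> = - log 2 c"
    have b0: "0 < \<beta>" using mid by (simp add: \<beta>_def)
    have z0: "G chi 0 0 = 0"
    proof -
      have "G chi 0 0 \<noteq> 1" using zc mid by auto
      then show ?thesis using z01[OF chi] by auto
    qed
    have "G chi K a = epow (real a / 2 ^ K) (ennreal \<beta>)" if a: "a \<le> 2 ^ K" for K a
    proof (cases "a = 0")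
      case True then show ?thesis using Gz[OF chi, of K] z0 b0 by (simp add: epow_pos)
    next
      case False
      then have a1: "1 \<le> a" by simp
      define q where "q = real a / 2 ^ K"
      define Q where "Q = q powr \<beta>"
      define g where "g = G chi K a"
      have qpos: "0 < q" using a1 by (simp add: q_def)
      have Qpos: "0 < Q" using qpos by (simp add: Q_def)
      have g0: "0 \<le> g" using Gnn[OF chi a] by (simp add: g_def)
      have bnd: "c * Q ^ n \<le> g ^ n \<and> g ^ n \<le> Q ^ n / c" for n
        using sandwich_bounds[OF chi _ _ a1 a, of n] mid
        by (simp add: c_def \<beta>_def q_def Q_def g_def)
      define r where "r = g / Q"
      have gr: "g = r * Q" using Qpos by (simp add: r_def)
      have rb: "c \<le> r ^ n \<and> r ^ n \<le> 1 / c" for n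
      proof -
        have Qn: "0 < Q ^ n" using Qpos by simp
        have "c * Q ^ n \<le> r ^ n * Q ^ n" "r ^ n * Q ^ n \<le> Q ^ n / c"
          using bnd[of n] unfolding gr by (simp_all add: power_mult_distrib)
        then show ?thesis using Qn mid by (simp add: field_simps)
      qed
      have "r = 1"
      proof (rule ccontr)
        assume "r \<noteq> 1"
        then consider "1 < r" | "r < 1" by linarith
        then show False
        proof cases
          case 1
          obtain n where "1 / c < r ^ n" using real_arch_pow[OF 1] by blast
          then show False using rb[of n] by simp
        next
          case 2
          obtain n where "r ^ n < c" using real_arch_pow_inv[OF mid(1) 2] by blast
          then show False using rb[of n] by simp
        qed
      qed
      then have "g = Q" using gr by simp
      then show ?thesis using b0 by (simp add: g_def Q_def q_def epow_pos)
    qed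
    then show ?thesis by blast
  qed
qed

end

theorem mainTheorem5:
  fixes chi :: "(point \<Rightarrow> point) \<Rightarrow> complex"
  assumes "indecomposable_character chi"
  shows "\<exists>\<alpha>::ennreal. \<forall>A. nice A \<longrightarrow>
           (\<lambda>m. chi (sA A m)) \<longlonglongrightarrow> complex_of_real (epow (measure mu A) \<alpha>)"
proof -
  have ch: "is_character chi" using assms by (simp add: indecomposable_character_def)
  obtain \<alpha> where \<alpha>: "\<forall>K a. a \<le> 2 ^ K \<longrightarrow> G chi K a = epow (real a / 2 ^ K) \<alpha>"
    using G_form[OF assms] by blast
  have "\<forall>A. nice A \<longrightarrow> (\<lambda>m. chi (sA A m)) \<longlonglongrightarrow> complex_of_real (epow (measure mu A) \<alpha>)"
  proof (intro allI impI)
    fix A assume "nice A"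
    then obtain k C where C: "C \<subseteq> Xn k" and A: "A = {x. map x [0..<k] \<in> C}"
      by (auto simp: nice_def)
    have Ac: "A = cyl k C" using A by (simp add: cyl_def)
    have mA: "measure mu A = real (card C) / 2 ^ k" using mu_cyl[OF C] Ac by simp
    have cC: "card C \<le> 2 ^ k" by (rule card_le_Xn[OF C])
    have "eventually (\<lambda>m. chi (sA A m) = complex_of_real (epow (measure mu A) \<alpha>)) sequentially"
    proof (rule eventually_sequentiallyI[of k])
      fix m assume "k \<le> m"
      have "chi (sA A m) = complex_of_real (G chi k (card C))"
        unfolding Ac by (rule Gval[OF ch C \<open>k \<le> m\<close>])
      then show "chi (sA A m) = complex_of_real (epow (measure mu A) \<alpha>)"
        using \<alpha> cC mA by simp
    qed
    then show "(\<lambda>m. chi (sA A m)) \<longlonglongrightarrow> complex_of_real (epow (measure mu A) \<alpha>)"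
      by (rule tendsto_eventually)
  qed
  then show ?thesis by blast
qed


end
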